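(* (i) For every $\mathbf t\in\mathbb R^K$ and $L\ge0$, \[ \mathrm P_{\boldsymbol\Delta/\sigma_0=\mathbf t}\big(|\hat\tau_{\rm PT}-\tau|\le L(1+\|\boldsymbol\gamma\|_1)^{-1/2}\sigma_0\big)=\int_{\mathbb R^K}\Big[\Phi\Big(L-\frac{\langle\boldsymbol\gamma,\mathbf t-\mathbf u'\rangle}{\sqrt{1+\|\boldsymbol\gamma\|_1}}\Big)-\Phi\Big(-L-\frac{\langle\boldsymbol\gamma,\mathbf t-\mathbf u'\rangle}{\sqrt{1+\|\boldsymbol\gamma\|_1}}\Big)\Big]\phi_{\mathbf t,V}(\mathbf u)\,d\mathbf u, \] where for $\mathbf u\in\mathbb R^K$, $u_j'=u_j\,\mathbf 1\big(|u_j|>(1+\gamma_j^{-1})^{1/2}c_{\alpha/2}\big)$ for $j=1,\dots,K$. (ii) Let \[ \hat L_{\rm PT}=\inf\Big\{L\ge0:\inf_{\boldsymbol\Delta:|\Delta_j/\sigma_0|\le b_j\forall j}\mathrm P_{\boldsymbol\Delta}\big(|\hat\tau_{\rm PT}-\tau|\le L(1+\|\boldsymbol\gamma\|_1)^{-1/2}\sigma_0\big)\ge1-\zeta\Big\}. \] Then $\hat L_{\rm PT}$ is the solution in $L$ of \[ \inf_{\boldsymbol\Delta:|\Delta_j/\sigma_0|\le b_j\forall j}\mathrm P_{\boldsymbol\Delta}\big(|\hat\tau_{\rm PT}-\tau|\le L(1+\|\boldsymbol\gamma\|_1)^{-1/2}\sigma_0\big)=1-\zeta. \] The resulting interval $[\hat\tau_{\rm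 PT}\pm\hat L_{\rm PT}(1+\|\boldsymbol\gamma\|_1)^{-1/2}\sigma_0]$ is the shortest symmetric centered interval with data-independent half-length achieving uniform coverage $1-\zeta$.
   Context: Let $K\ge1$, $\tau\in\mathbb R$ unknown and $\boldsymbol\Delta=(\Delta_1,\dots,\Delta_K)\in\mathbb R^K$ unknown biases. We observe independent random variables $\hat\tau_0\sim N(\tau,\sigma_0^2)$ and $\hat\tau_j\sim N(\tau+\Delta_j,\sigma_j^2)$ for $j=1,\dots,K$, with $\sigma_0,\dots,\sigma_K>0$ known. Define $\gamma_j=\sigma_0^2/\sigma_j^2$, $\boldsymbol\gamma=(\gamma_1,\dots,\gamma_K)$ and $\|\boldsymbol\gamma\|_1=\sum_j\gamma_j$. $\langle\cdot,\cdot\rangle$ is the Euclidean inner product. Write $\Phi$ for the standard normal CDF, and $c_a=\Phi^{-1}(1-a)$ for $a\in(0,1)$. Fix $\alpha,\zeta\in(0,1)$ and $\mathbf b\in[0,\infty)^K$. Let $\mathcal A_j=\{|\hat\tau_j-\hat\tau_0|\le(1+\gamma_j^{-1})^{1/2}\sigma_0c_{\alpha/2}\}$. The pretest estimator is \[ \hat\tau_{\rm PT}=\hat\tau_0+\sum_{j=1}^K\frac{\gamma_j}{1+\|\boldsymbol\gamma\|_1}(\hat\tau_j-\hat\tau_0)\mathbf 1(\mathcal A_j). \] $V$ is the $K\times K$ matrix with $V_{ij}=1+\gamma_i^{-1}\mathbf 1(i=j)$, and $\phi_{\mathbf t,V}$ is the density of $N(\mathbf t,V)$. $\mathrm P_{\boldsymbol\Delta/\sigma_0=\mathbf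 t}$ means probability under $\boldsymbol\Delta=\sigma_0\mathbf t$. *)

theory Defs
  imports "HOL-Probability.Probability"
begin

definition Phi :: "real \<Rightarrow> real" where
  "Phi x = measure (density lborel std_normal_density) {..x}"

definition cq :: "real \<Rightarrow> real" where
  "cq a = (THE c. Phi c = 1 - a)"

(* gamma_j = sigma_0^2 / sigma_j^2, indices j range over the finite type 'k (|'k| = K) *)
definition gam :: "real \<Rightarrow> real^'k \<Rightarrow> real^'k" where
  "gam \<sigma>0 \<sigma> = (\<chi> j. \<sigma>0\<^sup>2 / (\<sigma>$j)\<^sup>2)"

definition norm1 :: "real^'k \<Rightarrow> real" where
  "norm1 g = (\<Sum>j\<in>UNIV. \<bar>g$j\<bar>)"

definition Vmat :: "real^'k \<Rightarrow> real^'k^'k" where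
  "Vmat g = (\<chi> i j. 1 + (if i = j then 1 / g$i else 0))"

definition mvn_density :: "real^'k \<Rightarrow> real^'k^'k \<Rightarrow> real^'k \<Rightarrow> real" where
  "mvn_density t V u =
     exp (- ((u - t) \<bullet> (matrix_inv V *v (u - t))) / 2) / sqrt ((2 * pi) ^ CARD('k) * det V)"

(* joint law of (tau0_hat, (tau_j_hat)_j): independent normals *)
definition data_meas :: "real \<Rightarrow> real^'k \<Rightarrow> real \<Rightarrow> real^'k \<Rightarrow> (real \<times> (real^'k)) measure" where
  "data_meas \<tau> \<Delta> \<sigma>0 \<sigma> = density lborel
     (\<lambda>(x0, x). normal_density \<tau> \<sigma>0 x0 * (\<Prod>j\<in>UNIV. normal_density (\<tau> + \<Delta>$j) (\<sigma>$j) (x$j)))"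

definition tau_PT :: "real \<Rightarrow> real \<Rightarrow> real^'k \<Rightarrow> real \<times> (real^'k) \<Rightarrow> real" where
  "tau_PT \<alpha> \<sigma>0 \<sigma> \<omega> = (let x0 = fst \<omega>; x = snd \<omega>; g = gam \<sigma>0 \<sigma> in
     x0 + (\<Sum>j\<in>UNIV. g$j / (1 + norm1 g) * (x$j - x0) *
        (if \<bar>x$j - x0\<bar> \<le> sqrt (1 + 1 / g$j) * \<sigma>0 * cq (\<alpha> / 2) then 1 else 0)))"

definition cover_prob :: "real \<Rightarrow> real \<Rightarrow> real^'k \<Rightarrow> real \<Rightarrow> real^'k \<Rightarrow> real \<Rightarrow> real" where
  "cover_prob \<alpha> \<sigma>0 \<sigma> \<tau> \<Delta> L = measure (data_meas \<tau> \<Delta> \<sigma>0 \<sigma>)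
     {\<omega> \<in> space (data_meas \<tau> \<Delta> \<sigma>0 \<sigma>).
        \<bar>tau_PT \<alpha> \<sigma>0 \<sigma> \<omega> - \<tau>\<bar> \<le> L / sqrt (1 + norm1 (gam \<sigma>0 \<sigma>)) * \<sigma>0}"

definition bias_set :: "real \<Rightarrow> real^'k \<Rightarrow> (real^'k) set" where
  "bias_set \<sigma>0 b = {\<Delta>. \<forall>j. \<bar>\<Delta>$j / \<sigma>0\<bar> \<le> b$j}"

definition unif_cov :: "real \<Rightarrow> real \<Rightarrow> real^'k \<Rightarrow> real^'k \<Rightarrow> real \<Rightarrow> real \<Rightarrow> real" where
  "unif_cov \<alpha> \<sigma>0 \<sigma> b \<tau> L = (INF \<Delta>\<in>bias_set \<sigma>0 b. cover_prob \<alpha> \<sigma>0 \<sigma> \<tau> \<Delta> L)"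

definition L_PT :: "real \<Rightarrow> real \<Rightarrow> real \<Rightarrow> real^'k \<Rightarrow> real^'k \<Rightarrow> real \<Rightarrow> real" where
  "L_PT \<alpha> \<zeta> \<sigma>0 \<sigma> b \<tau> = Inf {L. L \<ge> 0 \<and> unif_cov \<alpha> \<sigma>0 \<sigma> b \<tau> L \<ge> 1 - \<zeta>}"

definition trunc_vec :: "real \<Rightarrow> real^'k \<Rightarrow> real^'k \<Rightarrow> real^'k" where
  "trunc_vec \<alpha> g u = (\<chi> j. if \<bar>u$j\<bar> > sqrt (1 + 1 / g$j) * cq (\<alpha> / 2) then u$j else 0)"

end

theory Submission
  imports Defs
begin

lemma detC:
  fixes d :: "'n::finite \<Rightarrow> real"
  shows "det (\<chi> i. if i = z then (\<chi> j. 1) else (\<chi> j. if i = j then d i else 0) :: real^'n^'n)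
     = (\<Prod>j\<in>UNIV-{z}. d j)"
proof -
  let ?A = "(\<chi> i. if i = z then (\<chi> j. 1) else (\<chi> j. if i = j then d i else 0) :: real^'n^'n)"
  have z: "(\<Prod>i\<in>UNIV. ?A$i$(p i)) = 0" if p: "p permutes UNIV" "p \<noteq> id" for p
  proof -
    obtain i where i: "p i \<noteq> i" using p(2) by (metis eq_id_iff)
    have "\<exists>w. w \<noteq> z \<and> p w \<noteq> w"
    proof (cases "i = z")
      case True
      have "p (p z) \<noteq> p z"
        using permutes_inj[OF p(1)] i True by (metis injD)
      then show ?thesis using i True by metis
    next
      case False then show ?thesis using i by blast
    qed
    then obtain w where w: "w \<noteq> z" "p w \<noteq> w" by blast
    have "?A$w$(p w) = 0" using w by auto
    then show ?thesis by (metis (no_types, lifting) UNIV_I finite prod_zero)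
  qed
  have "det ?A = (\<Sum>p\<in>{p. p permutes (UNIV::'n set)}. of_int (sign p) * (\<Prod>i\<in>UNIV. ?A$i$(p i)))"
    unfolding det_def by simp
  also have "\<dots> = of_int (sign (id::'n\<Rightarrow>'n)) * (\<Prod>i\<in>UNIV. ?A$i$(id i))"
    apply (subst sum.remove[where x=id])
      apply (auto simp: permutes_id)
    apply (rule sum.neutral)
    using z by auto
  also have "\<dots> = (\<Prod>i\<in>UNIV. ?A$i$i)" by (simp add: sign_id)
  also have "\<dots> = (\<Prod>j\<in>UNIV-{z}. d j)"
    apply (subst prod.remove[where x=z], simp, simp)
    by simp
  finally show ?thesis .
qed

lemma detB:
  fixes d :: "'n::finite \<Rightarrow> real"
  assumes "finite T" "z \<notin> T"
  shows "det (\<chi> i. if i = z then (\<chi> j. 1) else (\<chi> j. (if i = j then d i else 0) + (if i \<in> T then 1 else 0)) :: real^'n^'n)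
     = (\<Prod>j\<in>UNIV-{z}. d j)"
  using assms
proof (induction T rule: finite_induct)
  case empty
  have "(\<chi> i. if i = z then (\<chi> j. 1) else (\<chi> j. (if i = j then d i else 0) + (if i \<in> {} then 1 else 0)) :: real^'n^'n)
     = (\<chi> i. if i = z then (\<chi> j. 1) else (\<chi> j. if i = j then d i else 0))"
    by (simp add: vec_eq_iff)
  then show ?case using detC[of z d] by simp
next
  case (insert y T)
  let ?A = "(\<chi> i. if i = z then (\<chi> j. 1) else (\<chi> j. (if i = j then d i else 0) + (if i \<in> insert y T then 1 else 0)) :: real^'n^'n)"
  have yz: "y \<noteq> z" using insert by auto
  have "det ?A = det (\<chi> k. if k = y then row y ?A + (-1) *s row z ?A else row k ?A)"
    using det_row_operation[OF yz, of ?A "-1"] by simp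
  also have "(\<chi> k. if k = y then row y ?A + (-1) *s row z ?A else row k ?A) =
     (\<chi> i. if i = z then (\<chi> j. 1) else (\<chi> j. (if i = j then d i else 0) + (if i \<in> T then 1 else 0)))"
    using yz insert by (auto simp: vec_eq_iff row_def)
  finally show ?case using insert by simp
qed

lemma detA:
  fixes d :: "'n::finite \<Rightarrow> real"
  assumes "finite T"
  shows "det (\<chi> i. (\<chi> j. (if i = j then d i else 0) + (if i \<in> T then 1 else 0)) :: real^'n^'n)
     = (\<Prod>j\<in>UNIV. d j) + (\<Sum>i\<in>T. \<Prod>j\<in>UNIV-{i}. d j)"
  using assms
proof (induction T rule: finite_induct)
  case empty
  then show ?case by (subst det_diagonal) auto
next
  case (insert z T)
  let ?a = "(\<chi> j. if z = j then d z else 0) :: real^'n"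
  let ?b = "(\<chi> j. 1) :: real^'n"
  let ?c = "\<lambda>i. (\<chi> j. (if i = j then d i else 0) + (if i \<in> T then 1 else 0)) :: real^'n"
  have "(\<chi> i. (\<chi> j. (if i = j then d i else 0) + (if i \<in> insert z T then 1 else 0)) :: real^'n^'n)
     = (\<chi> i. if i = z then ?a + ?b else ?c i)"
    by (auto simp: vec_eq_iff)
  then have "det (\<chi> i. (\<chi> j. (if i = j then d i else 0) + (if i \<in> insert z T then 1 else 0)) :: real^'n^'n)
     = det (\<chi> i. if i = z then ?a else ?c i) + det (\<chi> i. if i = z then ?b else ?c i)"
    by (simp add: det_row_add)
  also have "(\<chi> i. if i = z then ?a else ?c i) = (\<chi> i. ?c i)"
    using insert by (auto simp: vec_eq_iff)
  also have "det (\<chi> i. if i = z then ?b else ?c i) = (\<Prod>j\<in>UNIV-{z}. d j)"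
    using detB[OF insert(1,2), of d] by simp
  finally show ?case using insert by simp
qed

definition Winv :: "real^'k \<Rightarrow> real^'k^'k" where
  "Winv g = (\<chi> i j. (if i = j then g$i else 0) - g$i * g$j / (1 + sum (\<lambda>j. g$j) UNIV))"

lemma sumH1: fixes X :: "'k::finite \<Rightarrow> real" shows "(\<Sum>k\<in>(UNIV::'k::finite set). (1 + (if i = k then a else 0)) * X k) = sum X UNIV + a * X i"
proof -
  have "(\<Sum>k\<in>(UNIV::'k set). (1 + (if i = k then a else 0)) * X k) = (\<Sum>k\<in>UNIV. X k + (if i = k then a * X k else 0))"
    by (rule sum.cong) (auto simp: algebra_simps)
  also have "\<dots> = sum X UNIV + a * X i" by (simp add: sum.distrib)
  finally show ?thesis .
qed

lemma sumH2: fixes X :: "'k::finite \<Rightarrow> real" shows "(\<Sum>k\<in>(UNIV::'k::finite set). X k * (1 + (if k = j then a k else 0))) = sum X UNIV + X j * a j"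
proof -
  have "(\<Sum>k\<in>(UNIV::'k set). X k * (1 + (if k = j then a k else 0))) = (\<Sum>k\<in>UNIV. X k + (if j = k then X k * a k else 0))"
    by (rule sum.cong) (auto simp: algebra_simps)
  also have "\<dots> = sum X UNIV + X j * a j" by (simp add: sum.distrib)
  finally show ?thesis .
qed

lemma sumH3: fixes g :: "'k::finite \<Rightarrow> real" shows "(\<Sum>k\<in>(UNIV::'k::finite set). (if k = j then c k else 0) - g k * e) = c j - sum g UNIV * e"
  by (subst sum_subtractf) (simp add: sum_distrib_right)

lemma sumH4: fixes g :: "'k::finite \<Rightarrow> real" shows "(\<Sum>k\<in>(UNIV::'k::finite set). (if i = k then c k else 0) - e * g k) = c i - e * sum g UNIV"
  by (subst sum_subtractf) (simp add: sum_distrib_left)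

lemma det_Vmat:
  fixes g :: "real^'k"
  assumes g: "\<forall>j. g$j > 0"
  shows "det (Vmat g) = (1 + sum (\<lambda>j. g$j) UNIV) / prod (\<lambda>j. g$j) UNIV"
proof -
  have "Vmat g = (\<chi> i. (\<chi> j. (if i = j then 1 / g$i else 0) + (if i \<in> UNIV then 1 else 0)))"
    by (simp add: Vmat_def vec_eq_iff)
  then have "det (Vmat g) = (\<Prod>j\<in>UNIV. 1 / g$j) + (\<Sum>i\<in>UNIV. \<Prod>j\<in>UNIV-{i}. 1 / g$j)"
    using detA[of UNIV "\<lambda>i. 1 / g$i"] by simp
  also have "(\<Sum>i\<in>UNIV. \<Prod>j\<in>UNIV-{i}. 1 / g$j) = (\<Sum>i\<in>UNIV. g$i * (\<Prod>j\<in>UNIV. 1 / g$j))"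
  proof (rule sum.cong[OF refl])
    fix i
    have "(\<Prod>j\<in>UNIV. 1 / g$j) = 1 / g$i * (\<Prod>j\<in>UNIV-{i}. 1 / g$j)"
      by (subst prod.remove[where x=i]) auto
    then show "(\<Prod>j\<in>UNIV-{i}. 1 / g$j) = g$i * (\<Prod>j\<in>UNIV. 1 / g$j)"
      using g[rule_format, of i] by (simp add: field_simps)
  qed
  also have "(\<Prod>j\<in>UNIV. 1 / g$j) = 1 / prod (\<lambda>j. g$j) UNIV"
    by (simp add: prod_dividef)
  also have "1 / prod (\<lambda>j. g$j) UNIV + (\<Sum>i\<in>UNIV. g$i * (1 / prod (\<lambda>j. g$j) UNIV))
     = (1 + sum (\<lambda>j. g$j) UNIV) / prod (\<lambda>j. g$j) UNIV"
    by (simp add: sum_distrib_right[symmetric] add_divide_distrib sum_divide_distrib[symmetric])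
  finally show ?thesis .
qed

lemma VW:
  fixes g :: "real^'k"
  assumes g: "\<forall>j. g$j > 0"
  shows "Vmat g ** Winv g = mat 1" "Winv g ** Vmat g = mat 1"
proof -
  define G where "G = sum (\<lambda>j. g$j) UNIV"
  have G: "1 + G > 0" unfolding G_def using g by (simp add: add_pos_nonneg sum_nonneg less_imp_le)
  have e1: "(\<Sum>k\<in>UNIV. (1 + (if i = k then 1 / g$i else 0)) * ((if k = j then g$k else 0) - g$k * (g$j / (1 + G))))
       = (if i = j then 1 else 0)" for i j
  proof -
    have "(\<Sum>k\<in>UNIV. (1 + (if i = k then 1 / g$i else 0)) * ((if k = j then g$k else 0) - g$k * (g$j / (1 + G))))
       = g$j - G * (g$j / (1 + G)) + 1 / g$i * ((if i = j then g$i else 0) - g$i * (g$j / (1 + G)))"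
      unfolding sumH1 sumH3 G_def by (simp cong: if_cong)
    also have "\<dots> = (if i = j then 1 else 0)"
    proof -
      have y: "g$j - G*(g$j/(1+G)) - g$j/(1+G) = 0" using G by (simp add: field_simps)
      have gi: "g$i \<noteq> 0" using g by (metis less_irrefl)
      have G': "G + 1 \<noteq> 0" using G by linarith
      have "1/g$i * (g$i - g$i*(g$j/(1+G))) = 1 - g$j/(1+G)" using gi by (simp add: right_diff_distrib)
      moreover have "1/g$i * (0 - g$i*(g$j/(1+G))) = - (g$j/(1+G))" using gi by simp
      ultimately show ?thesis using y by (cases "i = j") auto
    qed
    finally show ?thesis .
  qed
  have m1: "Vmat g ** Winv g = (\<chi> i j. \<Sum>k\<in>UNIV. (1 + (if i = k then 1 / g$i else 0)) * ((if k = j then g$k else 0) - g$k * (g$j / (1 + G))))"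
    unfolding Vmat_def Winv_def matrix_matrix_mult_def G_def by (simp add: vec_eq_iff)
  show "Vmat g ** Winv g = mat 1"
    unfolding m1 mat_def using e1 by (simp add: vec_eq_iff)
  have e2: "(\<Sum>k\<in>UNIV. ((if i = k then g$i else 0) - (g$i / (1 + G)) * g$k) * (1 + (if k = j then 1 / g$k else 0)))
       = (if i = j then 1 else 0)" for i j
  proof -
    have "(\<Sum>k\<in>UNIV. ((if i = k then g$i else 0) - (g$i / (1 + G)) * g$k) * (1 + (if k = j then 1 / g$k else 0)))
       = g$i - (g$i / (1 + G)) * G + ((if i = j then g$i else 0) - (g$i / (1 + G)) * g$j) * (1 / g$j)"
      unfolding sumH2 G_def by (simp add: sum_subtractf sum_distrib_left cong: if_cong)
    also have "\<dots> = (if i = j then 1 else 0)"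
    proof -
      have y: "g$i - (g$i/(1+G))*G - g$i/(1+G) = 0" using G by (simp add: field_simps)
      have gj: "g$j \<noteq> 0" using g by (metis less_irrefl)
      have G': "G + 1 \<noteq> 0" using G by linarith
      have "(g$i - (g$i/(1+G))*g$j) * (1/g$j) = 1 - g$i/(1+G)" if "i = j" using gj that by (simp add: left_diff_distrib diff_divide_distrib)
      moreover have "(0 - (g$i/(1+G))*g$j) * (1/g$j) = - (g$i/(1+G))" using gj by simp
      ultimately show ?thesis using y by (cases "i = j") auto
    qed
    finally show ?thesis .
  qed
  have m2: "Winv g ** Vmat g = (\<chi> i j. \<Sum>k\<in>UNIV. ((if i = k then g$i else 0) - (g$i / (1 + G)) * g$k) * (1 + (if k = j then 1 / g$k else 0)))"
    unfolding Vmat_def Winv_def matrix_matrix_mult_def G_def by (simp add: vec_eq_iff)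
  show "Winv g ** Vmat g = mat 1"
    unfolding m2 mat_def using e2 by (simp add: vec_eq_iff)
qed

lemma matrix_inv_Vmat:
  fixes g :: "real^'k"
  assumes g: "\<forall>j. g$j > 0"
  shows "matrix_inv (Vmat g) = Winv g"
proof -
  let ?P = "\<lambda>A'. Vmat g ** A' = mat 1 \<and> A' ** Vmat g = mat 1"
  have "?P (Winv g)" using VW[OF g] by simp
  then have "?P (matrix_inv (Vmat g))" unfolding matrix_inv_def by (rule someI)
  then have "matrix_inv (Vmat g) = matrix_inv (Vmat g) ** (Vmat g ** Winv g)"
    using VW[OF g] by simp
  also have "\<dots> = Winv g"
    using \<open>?P (matrix_inv (Vmat g))\<close> by (simp add: matrix_mul_assoc)
  finally show ?thesis .
qed

lemma quad_Winv:
  fixes g w :: "real^'k"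
  shows "w \<bullet> (Winv g *v w) = (\<Sum>j\<in>UNIV. g$j * (w$j)\<^sup>2) - (\<Sum>j\<in>UNIV. g$j * w$j)\<^sup>2 / (1 + sum (\<lambda>j. g$j) UNIV)"
proof -
  define G where "G = sum (\<lambda>j. g$j) UNIV"
  define S where "S = (\<Sum>j\<in>UNIV. g$j * w$j)"
  have "w \<bullet> (Winv g *v w) = (\<Sum>i\<in>UNIV. w$i * (\<Sum>j\<in>UNIV. ((if i = j then g$i else 0) - g$i * g$j / (1 + G)) * w$j))"
    by (simp add: inner_vec_def Winv_def matrix_vector_mult_def G_def)
  also have "\<dots> = (\<Sum>i\<in>UNIV. w$i * (g$i * w$i - g$i / (1 + G) * S))"
  proof (rule sum.cong[OF refl])
    fix i
    have "(\<Sum>j\<in>UNIV. ((if i = j then g$i else 0) - g$i * g$j / (1 + G)) * w$j)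
        = (\<Sum>j\<in>UNIV. (if i = j then g$i * w$j else 0) - g$i / (1 + G) * (g$j * w$j))"
      by (rule sum.cong) (auto simp: algebra_simps)
    also have "\<dots> = g$i * w$i - g$i / (1 + G) * S"
      by (simp add: sum_subtractf sum_distrib_left S_def)
    finally show "w$i * (\<Sum>j\<in>UNIV. ((if i = j then g$i else 0) - g$i * g$j / (1 + G)) * w$j) = w$i * (g$i * w$i - g$i / (1 + G) * S)"
      by simp
  qed
  also have "\<dots> = (\<Sum>i\<in>UNIV. g$i * (w$i)\<^sup>2 - S / (1 + G) * (g$i * w$i))"
    by (rule sum.cong) (auto simp: algebra_simps power2_eq_square)
  also have "\<dots> = (\<Sum>j\<in>UNIV. g$j * (w$j)\<^sup>2) - S\<^sup>2 / (1 + G)"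
    by (simp add: sum_subtractf sum_distrib_left[symmetric] sum_divide_distrib[symmetric] S_def power2_eq_square)
  finally show ?thesis by (simp add: G_def S_def)
qed

lemma gam_pos: "\<sigma>0 > 0 \<Longrightarrow> \<forall>j. \<sigma>$j > 0 \<Longrightarrow> \<forall>j. gam \<sigma>0 \<sigma> $ j > 0"
proof -
  assume a: "\<sigma>0 > 0" "\<forall>j. \<sigma>$j > 0"
  show ?thesis
  proof
    fix j
    have "(\<sigma>$j)\<^sup>2 > 0" using a(2)[rule_format, of j] by simp
    then show "gam \<sigma>0 \<sigma> $ j > 0" using a(1) by (simp add: gam_def)
  qed
qed

lemma norm1_pos: "\<forall>j. g$j > 0 \<Longrightarrow> norm1 g = sum (\<lambda>j. g$j) UNIV"
  unfolding norm1_def by (intro sum.cong) (auto simp: abs_of_pos)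

lemma norm1_nonneg: "norm1 g \<ge> 0"
  unfolding norm1_def by (simp add: sum_nonneg)

lemma sqrt_prod: "finite A \<Longrightarrow> sqrt (prod f A) = prod (\<lambda>x. sqrt (f x)) A"
  by (induction A rule: finite_induct) (auto simp: real_sqrt_mult)

lemma sq_expand: "(H::real) > 0 \<Longrightarrow> H * (z + S / H)\<^sup>2 = H * z\<^sup>2 + 2 * z * S + S\<^sup>2 / H"
proof -
  assume H: "H > 0"
  then have "z + S / H = (H * z + S) / H" by (simp add: field_simps)
  then have "H * (z + S / H)\<^sup>2 = (H * z + S)\<^sup>2 / H" using H by (simp add: power_divide power2_eq_square)
  also have "\<dots> = H * z\<^sup>2 + 2 * z * S + S\<^sup>2 / H" using H by (simp add: power2_eq_square field_simps)
  finally show ?thesis .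
qed

lemma gen_c: "(s::real) > 0 \<Longrightarrow> B > 0 \<Longrightarrow> A > 0 \<Longrightarrow> p / (B * A) = p / (B * s) * (s / A)"
  by (simp add: field_simps)

lemma nd_scaled:
  assumes "\<sigma>0 > 0" "\<sigma>j > 0"
  shows "normal_density (\<tau> + \<sigma>0 * tj) \<sigma>j (\<tau> + \<sigma>0*z + \<sigma>0*uj)
     = sqrt (\<sigma>0\<^sup>2/\<sigma>j\<^sup>2) / (sqrt (2*pi) * \<sigma>0) * exp (- ((\<sigma>0\<^sup>2/\<sigma>j\<^sup>2) * (z + (uj - tj))\<^sup>2) / 2)"
proof -
  have "sqrt (\<sigma>0\<^sup>2/\<sigma>j\<^sup>2) = \<sigma>0 / \<sigma>j" using assms by (simp add: real_sqrt_divide)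
  moreover have "sqrt (2 * pi * \<sigma>j\<^sup>2) = sqrt (2*pi) * \<sigma>j" using assms by (simp add: real_sqrt_mult)
  moreover have "(\<tau> + \<sigma>0*z + \<sigma>0*uj - (\<tau> + \<sigma>0 * tj))\<^sup>2 / (2 * \<sigma>j\<^sup>2) = ((\<sigma>0\<^sup>2/\<sigma>j\<^sup>2) * (z + (uj - tj))\<^sup>2) / 2"
    using assms by (simp add: field_simps power2_eq_square)
  ultimately show ?thesis using assms unfolding normal_density_def
    by (simp add: field_simps)
qed

lemma dens_id:
  fixes \<sigma>0 \<tau> z :: real and \<sigma> t u :: "real^'k"
  assumes s0: "\<sigma>0 > 0" and sj: "\<forall>j. \<sigma>$j > 0"
  shows "(\<sigma>0 * \<sigma>0^CARD('k)) * (normal_density \<tau> \<sigma>0 (\<tau>+\<sigma>0*z) *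
      (\<Prod>j\<in>UNIV. normal_density (\<tau> + \<sigma>0 * t$j) (\<sigma>$j) (\<tau> + \<sigma>0*z + \<sigma>0*u$j)))
    = mvn_density t (Vmat (gam \<sigma>0 \<sigma>)) u *
      normal_density (- (\<Sum>j\<in>UNIV. gam \<sigma>0 \<sigma> $ j * (u$j - t$j)) / (1 + norm1 (gam \<sigma>0 \<sigma>)))
         (1 / sqrt (1 + norm1 (gam \<sigma>0 \<sigma>))) z"
proof -
  define g where "g = gam \<sigma>0 \<sigma>"
  have g: "\<forall>j. g$j > 0" using gam_pos[OF s0 sj] g_def by simp
  have gj: "g$j = \<sigma>0\<^sup>2 / (\<sigma>$j)\<^sup>2" for j by (simp add: g_def gam_def)
  define G where "G = sum (\<lambda>j. g$j) UNIV"
  have nG: "norm1 g = G" using norm1_pos[OF g] G_def by simp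
  have G0: "G \<ge> 0" unfolding G_def using g by (simp add: sum_nonneg less_imp_le)
  define w where "w = u - t"
  define S where "S = (\<Sum>j\<in>UNIV. g$j * w$j)"
  define Q where "Q = (\<Sum>j\<in>UNIV. g$j * (w$j)\<^sup>2) - S\<^sup>2 / (1 + G)"
  define P where "P = prod (\<lambda>j. g$j) UNIV"
  have P0: "P > 0" unfolding P_def using g by (simp add: prod_pos)
  define A where "A = sqrt (2*pi)"
  have A0: "A > 0" unfolding A_def by simp
  define K where "K = CARD('k)"
  have quad: "(u - t) \<bullet> (matrix_inv (Vmat g) *v (u - t)) = Q"
    unfolding matrix_inv_Vmat[OF g] quad_Winv Q_def S_def w_def G_def by simp
  have detV: "det (Vmat g) = (1 + G) / P" unfolding det_Vmat[OF g] G_def P_def ..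
  have sq1: "sqrt ((2 * pi) ^ K * ((1 + G) / P)) = A^K * sqrt (1 + G) / sqrt P"
    using P0 G0 by (simp add: A_def real_sqrt_mult real_sqrt_divide real_sqrt_power power_mult_distrib)
  have mvn: "mvn_density t (Vmat g) u = sqrt P / (A^K * sqrt (1 + G)) * exp (- Q / 2)"
    unfolding mvn_density_def quad detV K_def[symmetric] sq1 by simp
  have ndm: "normal_density (- S / (1 + G)) (1 / sqrt (1 + G)) z = sqrt (1 + G) / A * exp (- ((1 + G) * (z + S / (1 + G))\<^sup>2) / 2)"
  proof -
    have "sqrt (2 * pi * (1 / sqrt (1 + G))\<^sup>2) = A / sqrt (1 + G)"
      using G0 by (simp add: A_def power_divide real_sqrt_mult real_sqrt_divide)
    moreover have "(z - - S / (1 + G))\<^sup>2 / (2 * (1 / sqrt (1 + G))\<^sup>2) = ((1 + G) * (z + S / (1 + G))\<^sup>2) / 2"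
      using G0 by (simp add: power_divide)
    ultimately show ?thesis unfolding normal_density_def by simp
  qed
  have nd0: "normal_density \<tau> \<sigma>0 (\<tau>+\<sigma>0*z) = 1 / (A * \<sigma>0) * exp (- z\<^sup>2 / 2)"
  proof -
    have "sqrt (2 * pi * \<sigma>0\<^sup>2) = A * \<sigma>0" using s0 by (simp add: A_def real_sqrt_mult)
    moreover have "(\<tau> + \<sigma>0 * z - \<tau>)\<^sup>2 / (2 * \<sigma>0\<^sup>2) = z\<^sup>2 / 2" using s0 by (simp add: power_mult_distrib)
    ultimately show ?thesis unfolding normal_density_def by simp
  qed
  have ndj: "normal_density (\<tau> + \<sigma>0 * t$j) (\<sigma>$j) (\<tau> + \<sigma>0*z + \<sigma>0*u$j)
      = sqrt (g$j) / (A * \<sigma>0) * exp (- (g$j * (z + w$j)\<^sup>2) / 2)" for j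
    using nd_scaled[OF s0 sj[rule_format, of j], of \<tau> "t$j" z "u$j"] by (simp add: gj A_def w_def)
  have prodj: "(\<Prod>j\<in>UNIV. normal_density (\<tau> + \<sigma>0 * t$j) (\<sigma>$j) (\<tau> + \<sigma>0*z + \<sigma>0*u$j))
      = sqrt P / (A * \<sigma>0)^K * exp (- (\<Sum>j\<in>UNIV. g$j * (z + w$j)\<^sup>2) / 2)"
    unfolding ndj prod.distrib
    by (simp add: exp_sum[symmetric] P_def K_def sqrt_prod prod_dividef sum_divide_distrib sum_negf)
  have sumexp: "(\<Sum>j\<in>UNIV. g$j * (z + w$j)\<^sup>2) = G * z\<^sup>2 + 2 * z * S + (\<Sum>j\<in>UNIV. g$j * (w$j)\<^sup>2)"
    by (simp add: G_def S_def power2_eq_square algebra_simps sum.distrib sum_distrib_left sum_distrib_right)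
  have expeq: "- z\<^sup>2 / 2 + - (\<Sum>j\<in>UNIV. g$j * (z + w$j)\<^sup>2) / 2 = - Q / 2 + - ((1 + G) * (z + S / (1 + G))\<^sup>2) / 2"
  proof -
    have "(1 + G) * (z + S / (1 + G))\<^sup>2 = (1 + G) * z\<^sup>2 + 2 * z * S + S\<^sup>2 / (1 + G)"
      using sq_expand[of "1 + G" z S] G0 by simp
    then show ?thesis unfolding sumexp Q_def by (simp add: field_simps)
  qed
  have "(\<sigma>0 * \<sigma>0^K) * (1 / (A * \<sigma>0) * exp (- z\<^sup>2 / 2) * (sqrt P / (A * \<sigma>0)^K * exp (- (\<Sum>j\<in>UNIV. g$j * (z + w$j)\<^sup>2) / 2)))
     = sqrt P / (A^K * A) * exp (- z\<^sup>2 / 2 + - (\<Sum>j\<in>UNIV. g$j * (z + w$j)\<^sup>2) / 2)"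
  proof -
    have c: "(\<sigma>0 * \<sigma>0^K) * (1/(A*\<sigma>0)) * (sqrt P/(A*\<sigma>0)^K) = sqrt P/(A^K*A)"
      using s0 A0 by (simp add: power_mult_distrib field_simps)
    have "(\<sigma>0 * \<sigma>0^K) * (1 / (A * \<sigma>0) * exp (- z\<^sup>2 / 2) * (sqrt P / (A * \<sigma>0)^K * exp (- (\<Sum>j\<in>UNIV. g$j * (z + w$j)\<^sup>2) / 2)))
      = ((\<sigma>0 * \<sigma>0^K) * (1/(A*\<sigma>0)) * (sqrt P/(A*\<sigma>0)^K)) * (exp (- z\<^sup>2 / 2) * exp (- (\<Sum>j\<in>UNIV. g$j * (z + w$j)\<^sup>2) / 2))"
      by (simp only: mult_ac)
    also have "\<dots> = sqrt P / (A^K * A) * exp (- z\<^sup>2 / 2 + - (\<Sum>j\<in>UNIV. g$j * (z + w$j)\<^sup>2) / 2)"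
      unfolding c exp_add ..
    finally show ?thesis .
  qed
  also have "\<dots> = sqrt P / (A^K * sqrt (1 + G)) * exp (- Q / 2) * (sqrt (1 + G) / A * exp (- ((1 + G) * (z + S / (1 + G))\<^sup>2) / 2))"
  proof -
    have c: "sqrt P / (A^K * A) = sqrt P / (A^K * sqrt (1 + G)) * (sqrt (1 + G) / A)"
      using gen_c[of "sqrt (1 + G)" "A^K" A "sqrt P"] G0 A0 by simp
    show ?thesis unfolding expeq exp_add c by (simp only: mult_ac)
  qed
  finally have calc: "(\<sigma>0 * \<sigma>0^K) * (1 / (A * \<sigma>0) * exp (- z\<^sup>2 / 2) * (sqrt P / (A * \<sigma>0)^K * exp (- (\<Sum>j\<in>UNIV. g$j * (z + w$j)\<^sup>2) / 2)))
     = sqrt P / (A^K * sqrt (1 + G)) * exp (- Q / 2) * (sqrt (1 + G) / A * exp (- ((1 + G) * (z + S / (1 + G))\<^sup>2) / 2))" .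
  have ndm': "normal_density (- (\<Sum>j\<in>UNIV. g $ j * (u$j - t$j)) / (1 + G)) (1 / sqrt (1 + G)) z
     = sqrt (1 + G) / A * exp (- ((1 + G) * (z + S / (1 + G))\<^sup>2) / 2)"
    using ndm by (simp add: S_def w_def)
  show ?thesis
    unfolding g_def[symmetric] nG nd0 prodj K_def[symmetric] mvn ndm' by (rule calc)
qed

definition mloc :: "real^'k \<Rightarrow> real^'k \<Rightarrow> real^'k \<Rightarrow> real" where
  "mloc g t u = - (\<Sum>j\<in>UNIV. g$j * (u$j - t$j)) / (1 + norm1 g)"

lemma nn_integral_affine_vec:
  fixes f :: "'a::euclidean_space \<Rightarrow> ennreal"
  assumes f[measurable]: "f \<in> borel_measurable borel" and c: "c \<noteq> 0"
  shows "(\<integral>\<^sup>+x. f x \<partial>lborel) = ennreal (\<bar>c\<bar>^DIM('a)) * (\<integral>\<^sup>+u. f (t + c *\<^sub>R u) \<partial>lborel)"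
  by (subst lborel_affine[OF c, of t]) (simp add: nn_integral_density nn_integral_distr nn_integral_cmult)

lemma vec_nth_meas[measurable]: "(\<lambda>x::real^'k. x$j) \<in> borel_measurable borel"
  by (intro borel_measurable_continuous_onI continuous_intros)

lemma dens_meas[measurable]:
  fixes \<sigma> \<Delta> :: "real^'k"
  shows "(\<lambda>(x0::real, x::real^'k). normal_density \<tau> \<sigma>0 x0 * (\<Prod>j\<in>UNIV. normal_density (\<tau> + \<Delta>$j) (\<sigma>$j) (x$j))) \<in> borel_measurable borel"
proof -
  have "(\<lambda>(x0::real, x::real^'k). normal_density \<tau> \<sigma>0 x0 * (\<Prod>j\<in>UNIV. normal_density (\<tau> + \<Delta>$j) (\<sigma>$j) (x$j))) \<in> borel_measurable (borel \<Otimes>\<^sub>M borel)"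
    by measurable
  then show ?thesis by (simp add: borel_prod)
qed

lemma DIM_vec: "DIM(real^'k) = CARD('k)" by simp

lemma core:
  fixes f :: "real \<times> (real^'k) \<Rightarrow> ennreal" and t c :: "real^'k"
  assumes s0: "\<sigma>0 > 0" and sj: "\<forall>j. \<sigma>$j > 0" and f[measurable]: "f \<in> borel_measurable borel"
  shows "(\<integral>\<^sup>+\<omega>. f \<omega> \<partial>data_meas \<tau> (\<sigma>0 *\<^sub>R t) \<sigma>0 \<sigma>) =
    (\<integral>\<^sup>+u. \<integral>\<^sup>+z. ennreal (mvn_density t (Vmat (gam \<sigma>0 \<sigma>)) (c + u) *
        normal_density (mloc (gam \<sigma>0 \<sigma>) t (c + u)) (1 / sqrt (1 + norm1 (gam \<sigma>0 \<sigma>))) z)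
       * f (\<tau> + \<sigma>0 * z, (\<chi> j. \<tau> + \<sigma>0 * z) + \<sigma>0 *\<^sub>R c + \<sigma>0 *\<^sub>R u) \<partial>lborel \<partial>lborel)"
proof -
  define D where "D = (\<lambda>(x0::real, x::real^'k). normal_density \<tau> \<sigma>0 x0 * (\<Prod>j\<in>UNIV. normal_density (\<tau> + (\<sigma>0 *\<^sub>R t)$j) (\<sigma>$j) (x$j)))"
  have Dm[measurable]: "D \<in> borel_measurable borel" unfolding D_def by measurable
  have D0: "D \<omega> \<ge> 0" for \<omega> unfolding D_def by (auto simp: case_prod_beta intro!: prod_nonneg mult_nonneg_nonneg)
  define X where "X = (\<lambda>z (u::real^'k). (\<chi> j. \<tau> + \<sigma>0 * z) + \<sigma>0 *\<^sub>R c + \<sigma>0 *\<^sub>R u)"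
  have Xm[measurable]: "(\<lambda>(z, u). X z u) \<in> borel_measurable (borel \<Otimes>\<^sub>M borel)"
  proof -
    have "continuous_on UNIV (\<lambda>p::real \<times> (real^'k). (\<chi> j. \<tau> + \<sigma>0 * fst p) + \<sigma>0 *\<^sub>R c + \<sigma>0 *\<^sub>R snd p)"
      by (intro continuous_intros)
    then have "(\<lambda>p::real \<times> (real^'k). (\<chi> j. \<tau> + \<sigma>0 * fst p) + \<sigma>0 *\<^sub>R c + \<sigma>0 *\<^sub>R snd p) \<in> borel_measurable borel"
      by (rule borel_measurable_continuous_onI)
    then show ?thesis unfolding X_def borel_prod by (simp add: case_prod_beta)
  qed
  have "(\<integral>\<^sup>+\<omega>. f \<omega> \<partial>data_meas \<tau> (\<sigma>0 *\<^sub>R t) \<sigma>0 \<sigma>) = (\<integral>\<^sup>+\<omega>. ennreal (D \<omega>) * f \<omega> \<partial>lborel)"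
  proof -
    have "data_meas \<tau> (\<sigma>0 *\<^sub>R t) \<sigma>0 \<sigma> = density lborel (\<lambda>\<omega>. ennreal (D \<omega>))"
      unfolding data_meas_def D_def by (simp add: case_prod_beta')
    then show ?thesis by (simp add: nn_integral_density)
  qed
  also have "\<dots> = (\<integral>\<^sup>+x0. \<integral>\<^sup>+x. ennreal (D (x0, x)) * f (x0, x) \<partial>lborel \<partial>lborel)"
  proof -
    have "(\<lambda>\<omega>. ennreal (D \<omega>) * f \<omega>) \<in> borel_measurable (lborel \<Otimes>\<^sub>M lborel)"
      unfolding lborel_prod by simp
    from lborel.nn_integral_fst[OF this] show ?thesis by (simp add: lborel_prod)
  qed
  also have "\<dots> = (\<integral>\<^sup>+x0. ennreal (\<sigma>0 ^ CARD('k)) * \<integral>\<^sup>+u. ennreal (D (x0, (\<chi> j. x0) + \<sigma>0 *\<^sub>R c + \<sigma>0 *\<^sub>R u)) * f (x0, (\<chi> j. x0) + \<sigma>0 *\<^sub>R c + \<sigma>0 *\<^sub>R u) \<partial>lborel \<partial>lborel)"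
  proof (rule nn_integral_cong)
    fix x0 :: real
    show "(\<integral>\<^sup>+x. ennreal (D (x0, x)) * f (x0, x) \<partial>lborel) = ennreal (\<sigma>0 ^ CARD('k)) * \<integral>\<^sup>+u. ennreal (D (x0, (\<chi> j. x0) + \<sigma>0 *\<^sub>R c + \<sigma>0 *\<^sub>R u)) * f (x0, (\<chi> j. x0) + \<sigma>0 *\<^sub>R c + \<sigma>0 *\<^sub>R u) \<partial>lborel"
      using nn_integral_affine_vec[of "\<lambda>x. ennreal (D (x0, x)) * f (x0, x)" \<sigma>0 "(\<chi> j. x0) + \<sigma>0 *\<^sub>R c"] s0
      by (simp add: add.assoc)
  qed
  also have "\<dots> = ennreal \<sigma>0 * (\<integral>\<^sup>+z. ennreal (\<sigma>0 ^ CARD('k)) * \<integral>\<^sup>+u. ennreal (D (\<tau> + \<sigma>0 * z, X z u)) * f (\<tau> + \<sigma>0 * z, X z u) \<partial>lborel \<partial>lborel)"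
  proof -
    have m: "(\<lambda>x0. ennreal (\<sigma>0 ^ CARD('k)) * \<integral>\<^sup>+u. ennreal (D (x0, (\<chi> j. x0) + \<sigma>0 *\<^sub>R c + \<sigma>0 *\<^sub>R u)) * f (x0, (\<chi> j. x0) + \<sigma>0 *\<^sub>R c + \<sigma>0 *\<^sub>R u) \<partial>lborel) \<in> borel_measurable borel"
    proof -
      have "(\<lambda>p::real \<times> (real^'k). (\<chi> j. fst p) + \<sigma>0 *\<^sub>R c + \<sigma>0 *\<^sub>R snd p) \<in> borel_measurable (borel \<Otimes>\<^sub>M borel)"
        unfolding borel_prod by (intro borel_measurable_continuous_onI continuous_intros)
      then have [measurable]: "(\<lambda>(x0, u::real^'k). (\<chi> j. x0) + \<sigma>0 *\<^sub>R c + \<sigma>0 *\<^sub>R u) \<in> borel_measurable (borel \<Otimes>\<^sub>M lborel)"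
        by (simp add: case_prod_beta)
      show ?thesis by measurable
    qed
    show ?thesis
      using nn_integral_real_affine[OF m, of \<sigma>0 \<tau>] s0 by (simp add: X_def)
  qed
  also have "\<dots> = (\<integral>\<^sup>+z. \<integral>\<^sup>+u. ennreal (\<sigma>0 * \<sigma>0 ^ CARD('k) * D (\<tau> + \<sigma>0 * z, X z u)) * f (\<tau> + \<sigma>0 * z, X z u) \<partial>lborel \<partial>lborel)"
  proof -
    have "(\<integral>\<^sup>+z. \<integral>\<^sup>+u. ennreal (\<sigma>0 * \<sigma>0 ^ CARD('k) * D (\<tau> + \<sigma>0 * z, X z u)) * f (\<tau> + \<sigma>0 * z, X z u) \<partial>lborel \<partial>lborel)
      = (\<integral>\<^sup>+z. ennreal \<sigma>0 * (ennreal (\<sigma>0 ^ CARD('k)) * \<integral>\<^sup>+u. ennreal (D (\<tau> + \<sigma>0 * z, X z u)) * f (\<tau> + \<sigma>0 * z, X z u) \<partial>lborel) \<partial>lborel)"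
    proof (rule nn_integral_cong)
      fix z
      have "(\<integral>\<^sup>+u. ennreal (\<sigma>0 * \<sigma>0 ^ CARD('k) * D (\<tau> + \<sigma>0 * z, X z u)) * f (\<tau> + \<sigma>0 * z, X z u) \<partial>lborel)
        = (\<integral>\<^sup>+u. (ennreal \<sigma>0 * ennreal (\<sigma>0 ^ CARD('k))) * (ennreal (D (\<tau> + \<sigma>0 * z, X z u)) * f (\<tau> + \<sigma>0 * z, X z u)) \<partial>lborel)"
        using s0 D0 by (intro nn_integral_cong) (simp add: ennreal_mult mult.assoc)
      also have "\<dots> = (ennreal \<sigma>0 * ennreal (\<sigma>0 ^ CARD('k))) * (\<integral>\<^sup>+u. ennreal (D (\<tau> + \<sigma>0 * z, X z u)) * f (\<tau> + \<sigma>0 * z, X z u) \<partial>lborel)"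
        by (rule nn_integral_cmult) measurable
      finally show "(\<integral>\<^sup>+u. ennreal (\<sigma>0 * \<sigma>0 ^ CARD('k) * D (\<tau> + \<sigma>0 * z, X z u)) * f (\<tau> + \<sigma>0 * z, X z u) \<partial>lborel)
        = ennreal \<sigma>0 * (ennreal (\<sigma>0 ^ CARD('k)) * \<integral>\<^sup>+u. ennreal (D (\<tau> + \<sigma>0 * z, X z u)) * f (\<tau> + \<sigma>0 * z, X z u) \<partial>lborel)"
        by (simp add: mult.assoc)
    qed
    also have "\<dots> = ennreal \<sigma>0 * (\<integral>\<^sup>+z. ennreal (\<sigma>0 ^ CARD('k)) * \<integral>\<^sup>+u. ennreal (D (\<tau> + \<sigma>0 * z, X z u)) * f (\<tau> + \<sigma>0 * z, X z u) \<partial>lborel \<partial>lborel)"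
      by (rule nn_integral_cmult) measurable
    finally show ?thesis by simp
  qed
  also have "\<dots> = (\<integral>\<^sup>+u. \<integral>\<^sup>+z. ennreal (\<sigma>0 * \<sigma>0 ^ CARD('k) * D (\<tau> + \<sigma>0 * z, X z u)) * f (\<tau> + \<sigma>0 * z, X z u) \<partial>lborel \<partial>lborel)"
  proof (rule lborel_pair.Fubini'[symmetric])
    show "(\<lambda>(z, u). ennreal (\<sigma>0 * \<sigma>0 ^ CARD('k) * D (\<tau> + \<sigma>0 * z, X z u)) * f (\<tau> + \<sigma>0 * z, X z u)) \<in> borel_measurable (lborel \<Otimes>\<^sub>M lborel)"
      by measurable
  qed
  also have "\<dots> = (\<integral>\<^sup>+u. \<integral>\<^sup>+z. ennreal (mvn_density t (Vmat (gam \<sigma>0 \<sigma>)) (c + u) *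
        normal_density (mloc (gam \<sigma>0 \<sigma>) t (c + u)) (1 / sqrt (1 + norm1 (gam \<sigma>0 \<sigma>))) z)
       * f (\<tau> + \<sigma>0 * z, X z u) \<partial>lborel \<partial>lborel)"
  proof (intro nn_integral_cong)
    fix z u
    have Xj: "X z u $ j = \<tau> + \<sigma>0*z + \<sigma>0*((c+u)$j)" for j by (simp add: X_def algebra_simps)
    have "\<sigma>0 * \<sigma>0 ^ CARD('k) * D (\<tau> + \<sigma>0 * z, X z u) = mvn_density t (Vmat (gam \<sigma>0 \<sigma>)) (c + u) *
        normal_density (mloc (gam \<sigma>0 \<sigma>) t (c + u)) (1 / sqrt (1 + norm1 (gam \<sigma>0 \<sigma>))) z"
      using dens_id[OF s0 sj, of \<tau> z t "c+u"] unfolding D_def mloc_def by (simp add: Xj)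
    then show "ennreal (\<sigma>0 * \<sigma>0 ^ CARD('k) * D (\<tau> + \<sigma>0 * z, X z u)) * f (\<tau> + \<sigma>0 * z, X z u) =
      ennreal (mvn_density t (Vmat (gam \<sigma>0 \<sigma>)) (c + u) *
        normal_density (mloc (gam \<sigma>0 \<sigma>) t (c + u)) (1 / sqrt (1 + norm1 (gam \<sigma>0 \<sigma>))) z) * f (\<tau> + \<sigma>0 * z, X z u)"
      by simp
  qed
  finally show ?thesis by (simp add: X_def)
qed

lemma Basis_vec_real: "(Basis :: (real^'k) set) = range (\<lambda>j. axis j 1)"
  by (auto simp: Basis_vec_def Basis_real_def)

lemma nn_integral_vec_prod:
  fixes h :: "'k::finite \<Rightarrow> real \<Rightarrow> ennreal"
  assumes [measurable]: "\<And>j. h j \<in> borel_measurable borel"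
  shows "(\<integral>\<^sup>+x. (\<Prod>j\<in>UNIV. h j (x$j)) \<partial>(lborel :: (real^'k) measure)) = (\<Prod>j\<in>UNIV. \<integral>\<^sup>+y. h j y \<partial>lborel)"
proof -
  have inj: "inj (\<lambda>j::'k. axis j (1::real))" by (auto simp: inj_on_def axis_eq_axis)
  have "(\<integral>\<^sup>+x. (\<Prod>b\<in>(Basis :: (real^'k) set). h (axis_index b) (x \<bullet> b)) \<partial>lborel) = (\<Prod>b\<in>(Basis :: (real^'k) set). \<integral>\<^sup>+y. h (axis_index b) y \<partial>lborel)"
    by (rule nn_integral_lborel_prod) auto
  moreover have "(\<Prod>b\<in>(Basis :: (real^'k) set). h (axis_index b) (x \<bullet> b)) = (\<Prod>j\<in>UNIV. h j (x$j))" for x :: "real^'k"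
    unfolding Basis_vec_real by (subst prod.reindex[OF inj]) (simp add: inner_axis)
  moreover have "(\<Prod>b\<in>(Basis :: (real^'k) set). \<integral>\<^sup>+y. h (axis_index b) y \<partial>lborel) = (\<Prod>j\<in>UNIV. \<integral>\<^sup>+y. h j y \<partial>lborel)"
    unfolding Basis_vec_real by (subst prod.reindex[OF inj]) simp
  ultimately show ?thesis by simp
qed

lemma nn_integral_nd: "s > 0 \<Longrightarrow> (\<integral>\<^sup>+y. ennreal (normal_density m s y) \<partial>lborel) = 1"
  using prob_space.emeasure_space_1[OF prob_space_normal_density[of s m]]
  by (simp add: emeasure_density)

lemma data_prob:
  fixes \<sigma> \<Delta> :: "real^'k"
  assumes s0: "\<sigma>0 > 0" and sj: "\<forall>j. \<sigma>$j > 0"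
  shows "prob_space (data_meas \<tau> \<Delta> \<sigma>0 \<sigma>)"
proof
  have m[measurable]: "(\<lambda>\<omega>. normal_density \<tau> \<sigma>0 (fst \<omega>) * (\<Prod>j\<in>UNIV. normal_density (\<tau> + \<Delta>$j) (\<sigma>$j) (snd \<omega>$j))) \<in> borel_measurable borel"
    using dens_meas[of \<tau> \<sigma>0 \<Delta> \<sigma>] by (simp add: case_prod_beta')
  have "emeasure (data_meas \<tau> \<Delta> \<sigma>0 \<sigma>) (space (data_meas \<tau> \<Delta> \<sigma>0 \<sigma>))
    = (\<integral>\<^sup>+\<omega>. ennreal (normal_density \<tau> \<sigma>0 (fst \<omega>) * (\<Prod>j\<in>UNIV. normal_density (\<tau> + \<Delta>$j) (\<sigma>$j) (snd \<omega>$j))) \<partial>lborel)"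
    unfolding data_meas_def by (subst emeasure_density) (auto simp: case_prod_beta')
  also have "\<dots> = (\<integral>\<^sup>+\<omega>. ennreal (normal_density \<tau> \<sigma>0 (fst \<omega>) * (\<Prod>j\<in>UNIV. normal_density (\<tau> + \<Delta>$j) (\<sigma>$j) (snd \<omega>$j))) \<partial>(lborel \<Otimes>\<^sub>M lborel))"
    by (simp add: lborel_prod)
  also have "\<dots> = (\<integral>\<^sup>+x0. \<integral>\<^sup>+x. ennreal (normal_density \<tau> \<sigma>0 x0) * (\<Prod>j\<in>UNIV. ennreal (normal_density (\<tau> + \<Delta>$j) (\<sigma>$j) (x$j))) \<partial>lborel \<partial>lborel)"
  proof -
    have "(\<lambda>\<omega>. ennreal (normal_density \<tau> \<sigma>0 (fst \<omega>) * (\<Prod>j\<in>UNIV. normal_density (\<tau> + \<Delta>$j) (\<sigma>$j) (snd \<omega>$j)))) \<in> borel_measurable (lborel \<Otimes>\<^sub>M lborel)"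
      unfolding lborel_prod by simp
    from lborel.nn_integral_fst[OF this] show ?thesis
      by (simp add: ennreal_mult prod_ennreal prod_nonneg)
  qed
  also have "\<dots> = (\<integral>\<^sup>+x0. ennreal (normal_density \<tau> \<sigma>0 x0) * (\<Prod>j\<in>UNIV. \<integral>\<^sup>+y. ennreal (normal_density (\<tau> + \<Delta>$j) (\<sigma>$j) y) \<partial>lborel) \<partial>lborel)"
    using nn_integral_vec_prod[of "\<lambda>j y. ennreal (normal_density (\<tau> + \<Delta>$j) (\<sigma>$j) y)"]
    by (subst nn_integral_cmult) auto
  also have "\<dots> = 1" using s0 sj by (simp add: nn_integral_nd)
  finally show "emeasure (data_meas \<tau> \<Delta> \<sigma>0 \<sigma>) (space (data_meas \<tau> \<Delta> \<sigma>0 \<sigma>)) = 1" .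
qed

lemma std_prob: "prob_space (density lborel std_normal_density)"
  using prob_space_normal_density[of 1 0] by simp

lemma std_Ioc: "a \<le> b \<Longrightarrow> measure (density lborel std_normal_density) {a<..b} = Phi b - Phi a"
proof -
  assume ab: "a \<le> b"
  interpret N: prob_space "density lborel std_normal_density" by (rule std_prob)
  have "{a<..b} = {..b} - {..a}" by auto
  then show ?thesis unfolding Phi_def using ab by (simp add: N.finite_measure_Diff)
qed

lemma nd_Icc:
  assumes sd: "sd > 0" and lh: "lo \<le> hi"
  shows "(\<integral>\<^sup>+z. ennreal (normal_density m sd z) * indicator {lo..hi} z \<partial>lborel)
     = ennreal (Phi ((hi - m) / sd) - Phi ((lo - m) / sd))"
proof -
  interpret N: prob_space "density lborel std_normal_density" by (rule std_prob)
  define a where "a = (lo - m) / sd"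
  define b where "b = (hi - m) / sd"
  have ab: "a \<le> b" using sd lh by (simp add: a_def b_def divide_right_mono)
  have "(\<integral>\<^sup>+z. ennreal (normal_density m sd z) * indicator {lo..hi} z \<partial>lborel)
     = ennreal sd * (\<integral>\<^sup>+y. ennreal (normal_density m sd (m + sd * y)) * indicator {lo..hi} (m + sd * y) \<partial>lborel)"
    using nn_integral_real_affine[of "\<lambda>z. ennreal (normal_density m sd z) * indicator {lo..hi} z" sd m] sd by simp
  also have "\<dots> = (\<integral>\<^sup>+y. ennreal sd * (ennreal (normal_density m sd (m + sd * y)) * indicator {lo..hi} (m + sd * y)) \<partial>lborel)"
    by (rule nn_integral_cmult[symmetric]) simp
  also have "\<dots> = (\<integral>\<^sup>+y. ennreal (std_normal_density y) * indicator {a<..b} y \<partial>lborel)"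
  proof (rule nn_integral_cong_AE)
    show "AE y in lborel. ennreal sd * (ennreal (normal_density m sd (m + sd * y)) * indicator {lo..hi} (m + sd * y)) = ennreal (std_normal_density y) * indicator {a<..b} y"
      using AE_lborel_singleton[of a]
    proof eventually_elim
      case (elim y)
      have i: "(m + sd * y \<in> {lo..hi}) = (y \<in> {a..b})"
        using sd by (auto simp: a_def b_def field_simps)
      have nd: "sd * normal_density m sd (m + sd * y) = std_normal_density y"
        using sd by (simp add: normal_density_def real_sqrt_mult power_mult_distrib)
      show ?case using i nd elim sd by (auto simp: indicator_def ennreal_mult[symmetric])
    qed
  qed
  also have "\<dots> = emeasure (density lborel std_normal_density) {a<..b}"
    by (subst emeasure_density) auto
  also have "\<dots> = ennreal (Phi b - Phi a)"
    using std_Ioc[OF ab] by (simp add: N.emeasure_eq_measure)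
  finally show ?thesis by (simp add: a_def b_def)
qed

lemma quadf_meas: "(\<lambda>u. (u - t) \<bullet> ((M::real^'k^'k) *v (u - t))) \<in> borel_measurable borel"
proof -
  have c1: "continuous_on UNIV ((*v) M)"
    by (rule linear_continuous_on[OF matrix_vector_mul_bounded_linear])
  have eq: "(\<lambda>u. M *v (u - t)) = (\<lambda>u. M *v u - M *v t)"
    by (simp add: matrix_vector_mult_diff_distrib)
  have "continuous_on UNIV (\<lambda>u. M *v (u - t))"
    unfolding eq by (rule continuous_on_diff[OF c1 continuous_on_const])
  then have "continuous_on UNIV (\<lambda>u. (u - t) \<bullet> ((M::real^'k^'k) *v (u - t)))"
    by (intro continuous_intros)
  then show ?thesis by (rule borel_measurable_continuous_onI)
qed

lemma mvn_meas[measurable]: "mvn_density t V \<in> borel_measurable borel"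
proof -
  note h[measurable] = quadf_meas[of t "matrix_inv V"]
  show ?thesis unfolding mvn_density_def[abs_def] by measurable
qed

lemma mvn_nonneg: "det V \<ge> 0 \<Longrightarrow> mvn_density t V u \<ge> 0"
  unfolding mvn_density_def by simp

lemma Phi_mono: "x \<le> y \<Longrightarrow> Phi x \<le> Phi y"
proof -
  assume "x \<le> y"
  interpret N: prob_space "density lborel std_normal_density" by (rule std_prob)
  show ?thesis unfolding Phi_def using \<open>x \<le> y\<close> by (intro N.finite_measure_mono) auto
qed

lemma Phi_meas[measurable]: "Phi \<in> borel_measurable borel"
  by (rule borel_measurable_mono) (auto simp: mono_def Phi_mono)

lemma Phi_bounds: "0 \<le> Phi x" "Phi x \<le> 1"
proof -
  interpret N: prob_space "density lborel std_normal_density" by (rule std_prob)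
  show "0 \<le> Phi x" "Phi x \<le> 1" unfolding Phi_def by auto
qed

lemma inner_trunc: "g \<bullet> (t - trunc_vec \<alpha> g u) = (\<Sum>j\<in>UNIV. g$j * (t$j - (if \<bar>u$j\<bar> > sqrt (1 + 1 / g$j) * cq (\<alpha> / 2) then u$j else 0)))"
  by (simp add: inner_vec_def trunc_vec_def)

lemma trunc_meas[measurable]: "(\<lambda>u. g \<bullet> (t - trunc_vec \<alpha> g u)) \<in> borel_measurable borel"
  unfolding inner_trunc by measurable

definition bpt :: "real \<Rightarrow> real^'k \<Rightarrow> real^'k \<Rightarrow> real" where
  "bpt \<alpha> g u = (\<Sum>j\<in>UNIV. g$j / (1 + norm1 g) * u$j * (if \<bar>u$j\<bar> \<le> sqrt (1 + 1 / g$j) * cq (\<alpha> / 2) then 1 else 0))"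

lemma tauPT_point:
  assumes s0: "\<sigma>0 > 0"
  shows "tau_PT \<alpha> \<sigma>0 \<sigma> (\<tau> + \<sigma>0*z, (\<chi> j. \<tau> + \<sigma>0*z) + \<sigma>0 *\<^sub>R c + \<sigma>0 *\<^sub>R u) - \<tau>
     = \<sigma>0 * (z + bpt \<alpha> (gam \<sigma>0 \<sigma>) (c + u))"
proof -
  define g where "g = gam \<sigma>0 \<sigma>"
  define C where "C = cq (\<alpha> / 2)"
  have cond: "(\<bar>\<sigma>0 * w\<bar> \<le> sqrt (1 + 1 / g$j) * \<sigma>0 * C) = (\<bar>w\<bar> \<le> sqrt (1 + 1 / g$j) * C)" for w j
  proof -
    have "\<bar>\<sigma>0 * w\<bar> = \<sigma>0 * \<bar>w\<bar>" using s0 by (simp add: abs_mult)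
    moreover have "sqrt (1 + 1 / g$j) * \<sigma>0 * C = \<sigma>0 * (sqrt (1 + 1 / g$j) * C)" by simp
    ultimately show ?thesis using s0 by simp
  qed
  have "tau_PT \<alpha> \<sigma>0 \<sigma> (\<tau> + \<sigma>0*z, (\<chi> j. \<tau> + \<sigma>0*z) + \<sigma>0 *\<^sub>R c + \<sigma>0 *\<^sub>R u)
     = \<tau> + \<sigma>0*z + (\<Sum>j\<in>UNIV. g$j / (1 + norm1 g) * (\<sigma>0 * (c+u)$j) *
        (if \<bar>\<sigma>0 * (c+u)$j\<bar> \<le> sqrt (1 + 1 / g$j) * \<sigma>0 * C then 1 else 0))"
  proof -
    have xj: "((\<chi> j. \<tau> + \<sigma>0*z) + \<sigma>0 *\<^sub>R c + \<sigma>0 *\<^sub>R u)$j - (\<tau> + \<sigma>0*z) = \<sigma>0 * (c+u)$j" for j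
      by (simp add: algebra_simps)
    show ?thesis by (simp only: tau_PT_def Let_def fst_conv snd_conv xj g_def C_def)
  qed
  also have "\<dots> = \<tau> + \<sigma>0*z + \<sigma>0 * bpt \<alpha> g (c + u)"
    unfolding cond unfolding bpt_def C_def by (simp add: sum_distrib_left mult_ac)
  finally show ?thesis by (simp add: g_def distrib_left)
qed

lemma key_alg:
  fixes g t u :: "real^'k"
  assumes g: "\<forall>j. g$j > 0"
  shows "sqrt (1 + norm1 g) * (bpt \<alpha> g u + mloc g t u) = g \<bullet> (t - trunc_vec \<alpha> g u) / sqrt (1 + norm1 g)"
proof -
  define H where "H = 1 + norm1 g"
  have H: "H > 0" unfolding H_def using norm1_nonneg[of g] by linarith
  define I where "I = (\<lambda>j. if \<bar>u$j\<bar> \<le> sqrt (1 + 1 / g$j) * cq (\<alpha> / 2) then 1 else (0::real))"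
  have b: "bpt \<alpha> g u = (\<Sum>j\<in>UNIV. g$j * u$j * I j) / H"
    unfolding bpt_def H_def[symmetric] I_def sum_divide_distrib by (rule sum.cong) auto
  have m: "mloc g t u = - (\<Sum>j\<in>UNIV. g$j * (u$j - t$j)) / H"
    unfolding mloc_def H_def ..
  have "bpt \<alpha> g u + mloc g t u = ((\<Sum>j\<in>UNIV. g$j * u$j * I j) - (\<Sum>j\<in>UNIV. g$j * (u$j - t$j))) / H"
    unfolding b m by (simp only: diff_divide_distrib minus_divide_left diff_conv_add_uminus add_divide_distrib)
  also have "(\<Sum>j\<in>UNIV. g$j * u$j * I j) - (\<Sum>j\<in>UNIV. g$j * (u$j - t$j)) = (\<Sum>j\<in>UNIV. g$j * u$j * I j - g$j * (u$j - t$j))"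
    by (simp only: sum_subtractf)
  also have "\<dots> = g \<bullet> (t - trunc_vec \<alpha> g u)"
    unfolding inner_trunc
  proof (rule sum.cong[OF refl])
    fix j
    show "g$j * u$j * I j - g$j * (u$j - t$j) = g$j * (t$j - (if \<bar>u$j\<bar> > sqrt (1 + 1 / g$j) * cq (\<alpha> / 2) then u$j else 0))"
      unfolding I_def by (cases "\<bar>u$j\<bar> \<le> sqrt (1 + 1 / g$j) * cq (\<alpha> / 2)") (simp_all add: right_diff_distrib)
  qed
  finally have e: "bpt \<alpha> g u + mloc g t u = g \<bullet> (t - trunc_vec \<alpha> g u) / H" .
  have sH: "sqrt H > 0" "sqrt H * sqrt H = H" using H by auto
  have "sqrt H * (X / H) = X / sqrt H" for X
  proof -
    have "sqrt H * (X / H) = sqrt H * (X / (sqrt H * sqrt H))" using sH by simp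
    also have "\<dots> = X / sqrt H" using sH(1) by (simp add: divide_simps)
    finally show ?thesis .
  qed
  then show ?thesis unfolding e by (simp add: H_def)
qed

lemma tauPT_meas[measurable]: "tau_PT \<alpha> \<sigma>0 \<sigma> \<in> borel_measurable borel"
proof -
  have "tau_PT \<alpha> \<sigma>0 \<sigma> \<in> borel_measurable (borel \<Otimes>\<^sub>M borel)"
    unfolding tau_PT_def[abs_def] Let_def by measurable
  then show ?thesis by (simp add: borel_prod)
qed

lemma sets_data: "sets (data_meas \<tau> \<Delta> \<sigma>0 \<sigma>) = sets borel"
  unfolding data_meas_def by simp

lemma space_data: "space (data_meas \<tau> \<Delta> \<sigma>0 \<sigma>) = UNIV"
  unfolding data_meas_def by simp

lemma det_Vmat_pos: "\<forall>j. g$j > 0 \<Longrightarrow> det (Vmat g) > 0"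
proof -
  assume g: "\<forall>j. g$j > 0"
  have "sum (\<lambda>j. g$j) UNIV \<ge> 0" using g by (simp add: sum_nonneg less_imp_le)
  moreover have "prod (\<lambda>j. g$j) UNIV > 0" using g by (simp add: prod_pos)
  ultimately show ?thesis unfolding det_Vmat[OF g] by simp
qed

lemma part1:
  fixes \<sigma> t :: "real^'k"
  assumes s0: "\<sigma>0 > 0" and sj: "\<forall>j. \<sigma>$j > 0" and L: "L \<ge> 0"
  shows "cover_prob \<alpha> \<sigma>0 \<sigma> \<tau> (\<sigma>0 *\<^sub>R t) L =
       (\<integral>u. (Phi (L - gam \<sigma>0 \<sigma> \<bullet> (t - trunc_vec \<alpha> (gam \<sigma>0 \<sigma>) u) / sqrt (1 + norm1 (gam \<sigma>0 \<sigma>)))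
              - Phi (- L - gam \<sigma>0 \<sigma> \<bullet> (t - trunc_vec \<alpha> (gam \<sigma>0 \<sigma>) u) / sqrt (1 + norm1 (gam \<sigma>0 \<sigma>))))
             * mvn_density t (Vmat (gam \<sigma>0 \<sigma>)) u \<partial>lborel)"
proof -
  define g where "g = gam \<sigma>0 \<sigma>"
  have g: "\<forall>j. g$j > 0" unfolding g_def using gam_pos[OF s0 sj] .
  define s where "s = sqrt (1 + norm1 g)"
  have s: "s > 0" unfolding s_def using norm1_nonneg[of g] by simp
  define M where "M = data_meas \<tau> (\<sigma>0 *\<^sub>R t) \<sigma>0 \<sigma>"
  define a where "a = (\<lambda>u. g \<bullet> (t - trunc_vec \<alpha> g u) / s)"
  define F where "F = (\<lambda>u. (Phi (L - a u) - Phi (- L - a u)) * mvn_density t (Vmat g) u)"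
  have Fm[measurable]: "F \<in> borel_measurable borel" unfolding F_def a_def by measurable
  have F0: "F u \<ge> 0" for u
    unfolding F_def using Phi_mono[of "- L - a u" "L - a u"] L mvn_nonneg[of "Vmat g" t u] det_Vmat_pos[OF g]
    by (auto intro!: mult_nonneg_nonneg)
  define E where "E = {\<omega> \<in> space M. \<bar>tau_PT \<alpha> \<sigma>0 \<sigma> \<omega> - \<tau>\<bar> \<le> L / s * \<sigma>0}"
  have Em: "E \<in> sets borel" unfolding E_def M_def space_data by measurable
  have lhs: "cover_prob \<alpha> \<sigma>0 \<sigma> \<tau> (\<sigma>0 *\<^sub>R t) L = enn2real (emeasure M E)"
    unfolding cover_prob_def measure_def E_def M_def s_def g_def ..
  have "emeasure M E = (\<integral>\<^sup>+\<omega>. indicator E \<omega> \<partial>M)"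
    using Em by (simp add: M_def sets_data)
  also have "\<dots> = (\<integral>\<^sup>+u. \<integral>\<^sup>+z. ennreal (mvn_density t (Vmat g) (0 + u) *
        normal_density (mloc g t (0 + u)) (1 / s) z)
       * indicator E (\<tau> + \<sigma>0 * z, (\<chi> j. \<tau> + \<sigma>0 * z) + \<sigma>0 *\<^sub>R 0 + \<sigma>0 *\<^sub>R u) \<partial>lborel \<partial>lborel)"
    unfolding M_def g_def s_def by (rule core[OF s0 sj]) (use Em in simp)
  also have "\<dots> = (\<integral>\<^sup>+u. ennreal (F u) \<partial>lborel)"
  proof (rule nn_integral_cong)
    fix u :: "real^'k"
    define b where "b = bpt \<alpha> g u"
    define m where "m = mloc g t u"
    have ind: "indicator E (\<tau> + \<sigma>0 * z, (\<chi> j. \<tau> + \<sigma>0 * z) + \<sigma>0 *\<^sub>R 0 + \<sigma>0 *\<^sub>R u)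
        = (indicator {- b - L / s .. - b + L / s} z :: ennreal)" for z
    proof -
      have "tau_PT \<alpha> \<sigma>0 \<sigma> (\<tau> + \<sigma>0 * z, (\<chi> j. \<tau> + \<sigma>0 * z) + \<sigma>0 *\<^sub>R 0 + \<sigma>0 *\<^sub>R u) - \<tau> = \<sigma>0 * (z + b)"
        using tauPT_point[OF s0, of \<alpha> \<sigma> \<tau> z 0 u] by (simp add: b_def g_def)
      moreover have "(\<bar>\<sigma>0 * (z + b)\<bar> \<le> L / s * \<sigma>0) = (z \<in> {- b - L / s .. - b + L / s})"
      proof -
        have "\<bar>\<sigma>0 * (z + b)\<bar> = \<sigma>0 * \<bar>z + b\<bar>" using s0 by (simp add: abs_mult)
        moreover have "L / s * \<sigma>0 = \<sigma>0 * (L / s)" by simp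
        moreover have "(\<bar>z + b\<bar> \<le> L / s) = (z \<in> {- b - L / s .. - b + L / s})" by (auto simp: abs_le_iff)
        ultimately show ?thesis using s0 by (simp only: mult_le_cancel_left_pos)
      qed
      ultimately show ?thesis unfolding E_def M_def space_data indicator_def by auto
    qed
    have "(\<integral>\<^sup>+z. ennreal (mvn_density t (Vmat g) (0 + u) * normal_density (mloc g t (0 + u)) (1 / s) z)
       * indicator E (\<tau> + \<sigma>0 * z, (\<chi> j. \<tau> + \<sigma>0 * z) + \<sigma>0 *\<^sub>R 0 + \<sigma>0 *\<^sub>R u) \<partial>lborel)
      = (\<integral>\<^sup>+z. ennreal (mvn_density t (Vmat g) u) * (ennreal (normal_density m (1 / s) z) * indicator {- b - L / s .. - b + L / s} z) \<partial>lborel)"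
      unfolding ind m_def using mvn_nonneg[of "Vmat g" t u] det_Vmat_pos[OF g]
      by (intro nn_integral_cong) (simp add: ennreal_mult mult.assoc)
    also have "\<dots> = ennreal (mvn_density t (Vmat g) u) * (\<integral>\<^sup>+z. ennreal (normal_density m (1 / s) z) * indicator {- b - L / s .. - b + L / s} z \<partial>lborel)"
      by (rule nn_integral_cmult) simp
    also have "\<dots> = ennreal (mvn_density t (Vmat g) u) * ennreal (Phi ((- b + L / s - m) / (1 / s)) - Phi ((- b - L / s - m) / (1 / s)))"
      using s L by (subst nd_Icc) auto
    also have "(- b + L / s - m) / (1 / s) = L - a u"
    proof -
      have e: "s * (b + m) = a u" unfolding a_def b_def m_def s_def using key_alg[OF g] by simp
      have "(- b + L / s - m) / (1 / s) = (- b + L / s - m) * s" by simp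
      also have "\<dots> = L - s * (b + m)" using s by (simp add: algebra_simps)
      finally show ?thesis using e by simp
    qed
    also have "(- b - L / s - m) / (1 / s) = - L - a u"
    proof -
      have e: "s * (b + m) = a u" unfolding a_def b_def m_def s_def using key_alg[OF g] by simp
      have "(- b - L / s - m) / (1 / s) = (- b - L / s - m) * s" by simp
      also have "\<dots> = - L - s * (b + m)" using s by (simp add: algebra_simps)
      finally show ?thesis using e by simp
    qed
    also have "ennreal (mvn_density t (Vmat g) u) * ennreal (Phi (L - a u) - Phi (- L - a u)) = ennreal (F u)"
    proof -
      have "Phi (L - a u) - Phi (- L - a u) \<ge> 0" using Phi_mono[of "- L - a u" "L - a u"] L by simp
      then show ?thesis
        unfolding F_def using mvn_nonneg[of "Vmat g" t u] det_Vmat_pos[OF g]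
        by (simp add: ennreal_mult[symmetric] mult.commute)
    qed
    finally show "(\<integral>\<^sup>+z. ennreal (mvn_density t (Vmat g) (0 + u) * normal_density (mloc g t (0 + u)) (1 / s) z)
       * indicator E (\<tau> + \<sigma>0 * z, (\<chi> j. \<tau> + \<sigma>0 * z) + \<sigma>0 *\<^sub>R 0 + \<sigma>0 *\<^sub>R u) \<partial>lborel) = ennreal (F u)" .
  qed
  finally have "emeasure M E = (\<integral>\<^sup>+u. ennreal (F u) \<partial>lborel)" .
  moreover have "integral\<^sup>L lborel F = enn2real (\<integral>\<^sup>+u. ennreal (F u) \<partial>lborel)"
    by (rule integral_eq_nn_integral) (use F0 in auto)
  ultimately show ?thesis unfolding lhs F_def a_def g_def s_def by simp
qed

lemma std_le1: "std_normal_density z \<le> 1"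
proof -
  have e: "exp (- z\<^sup>2 / 2) \<le> 1" by simp
  have "1 \<le> sqrt (2 * pi)" using pi_gt3 by (intro real_le_rsqrt) simp
  then have a: "1 / sqrt (2 * pi) \<le> 1" by simp
  show ?thesis unfolding std_normal_density_def
    by (rule mult_le_one[OF a _ e]) simp_all
qed

lemma std_mono: "\<bar>z\<bar> \<le> R \<Longrightarrow> std_normal_density R \<le> std_normal_density z"
proof -
  assume "\<bar>z\<bar> \<le> R"
  then have "\<bar>z\<bar>\<^sup>2 \<le> R\<^sup>2" by (intro power_mono) auto
  then have "z\<^sup>2 \<le> R\<^sup>2" by simp
  then have "exp (- R\<^sup>2 / 2) \<le> exp (- z\<^sup>2 / 2)" by simp
  then show ?thesis unfolding std_normal_density_def by (simp add: divide_right_mono)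
qed

lemma Phi_diff_emeasure: "x \<le> y \<Longrightarrow> ennreal (Phi y - Phi x) = (\<integral>\<^sup>+z. ennreal (std_normal_density z) * indicator {x<..y} z \<partial>lborel)"
proof -
  assume xy: "x \<le> y"
  interpret N: prob_space "density lborel std_normal_density" by (rule std_prob)
  have "ennreal (Phi y - Phi x) = emeasure (density lborel std_normal_density) {x<..y}"
    using std_Ioc[OF xy] by (simp add: N.emeasure_eq_measure)
  also have "\<dots> = (\<integral>\<^sup>+z. ennreal (std_normal_density z) * indicator {x<..y} z \<partial>lborel)"
    by (subst emeasure_density) auto
  finally show ?thesis .
qed

lemma Phi_diff_upper: "x \<le> y \<Longrightarrow> Phi y - Phi x \<le> y - x"
proof -
  assume xy: "x \<le> y"
  have "ennreal (Phi y - Phi x) \<le> (\<integral>\<^sup>+z. indicator {x<..y} z \<partial>lborel)"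
    unfolding Phi_diff_emeasure[OF xy]
    by (intro nn_integral_mono) (auto simp: indicator_def std_le1)
  also have "\<dots> = ennreal (y - x)" using xy by simp
  finally show ?thesis using xy by (simp add: ennreal_le_iff)
qed

lemma Phi_diff_lower:
  assumes xy: "x \<le> y" and R: "\<bar>x\<bar> \<le> R" "\<bar>y\<bar> \<le> R"
  shows "(y - x) * std_normal_density R \<le> Phi y - Phi x"
proof -
  have "ennreal ((y - x) * std_normal_density R) = (\<integral>\<^sup>+z. ennreal (std_normal_density R) * indicator {x<..y} z \<partial>lborel)"
    using xy by (simp add: nn_integral_cmult ennreal_mult mult.commute)
  also have "\<dots> \<le> ennreal (Phi y - Phi x)"
    unfolding Phi_diff_emeasure[OF xy]
  proof (intro nn_integral_mono)
    fix z
    show "ennreal (std_normal_density R) * indicator {x<..y} z \<le> ennreal (std_normal_density z) * indicator {x<..y} z"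
    proof (cases "z \<in> {x<..y}")
      case True
      then have "\<bar>z\<bar> \<le> R" using R by auto
      then show ?thesis using True std_mono by (simp add: ennreal_leI)
    qed simp
  qed
  finally show ?thesis using Phi_mono[OF xy] by (simp add: ennreal_le_iff)
qed

lemma Phi_lim_top: "(Phi \<longlongrightarrow> 1) at_top" and Phi_lim_bot: "(Phi \<longlongrightarrow> 0) at_bot"
proof -
  have "real_distribution (density lborel std_normal_density)"
    unfolding real_distribution_def real_distribution_axioms_def using std_prob by simp
  then interpret N: real_distribution "density lborel std_normal_density" .
  have e: "Phi = cdf (density lborel std_normal_density)" by (simp add: fun_eq_iff Phi_def cdf_def)
  show "(Phi \<longlongrightarrow> 1) at_top" unfolding e by (rule N.cdf_lim_at_top_prob)
  show "(Phi \<longlongrightarrow> 0) at_bot" unfolding e by (rule N.cdf_lim_at_bot)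
qed

lemma mvn_total:
  fixes \<sigma> t :: "real^'k"
  assumes s0: "\<sigma>0 > 0" and sj: "\<forall>j. \<sigma>$j > 0"
  shows "(\<integral>\<^sup>+u. ennreal (mvn_density t (Vmat (gam \<sigma>0 \<sigma>)) u) \<partial>lborel) = 1"
proof -
  define g where "g = gam \<sigma>0 \<sigma>"
  define s where "s = sqrt (1 + norm1 g)"
  have s: "1 / s > 0" unfolding s_def using norm1_nonneg[of g] by simp
  interpret P: prob_space "data_meas 0 (\<sigma>0 *\<^sub>R t) \<sigma>0 \<sigma>" by (rule data_prob[OF s0 sj])
  have "1 = (\<integral>\<^sup>+\<omega>. 1 \<partial>data_meas 0 (\<sigma>0 *\<^sub>R t) \<sigma>0 \<sigma>)" using P.emeasure_space_1 by simp
  also have "\<dots> = (\<integral>\<^sup>+u. \<integral>\<^sup>+z. ennreal (mvn_density t (Vmat g) (0 + u) *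
        normal_density (mloc g t (0 + u)) (1 / s) z) * 1 \<partial>lborel \<partial>lborel)"
    unfolding g_def s_def by (rule core[OF s0 sj]) simp
  also have "\<dots> = (\<integral>\<^sup>+u. ennreal (mvn_density t (Vmat g) u) \<partial>lborel)"
  proof (rule nn_integral_cong)
    fix u
    have "(\<integral>\<^sup>+z. ennreal (mvn_density t (Vmat g) (0 + u) * normal_density (mloc g t (0 + u)) (1 / s) z) * 1 \<partial>lborel)
      = (\<integral>\<^sup>+z. ennreal (mvn_density t (Vmat g) u) * ennreal (normal_density (mloc g t u) (1 / s) z) \<partial>lborel)"
      using mvn_nonneg[of "Vmat g" t u] det_Vmat_pos[of g] gam_pos[OF s0 sj]
      by (intro nn_integral_cong) (simp add: ennreal_mult g_def)
    also have "\<dots> = ennreal (mvn_density t (Vmat g) u) * (\<integral>\<^sup>+z. ennreal (normal_density (mloc g t u) (1 / s) z) \<partial>lborel)"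
      by (rule nn_integral_cmult) simp
    also have "\<dots> = ennreal (mvn_density t (Vmat g) u)" using nn_integral_nd[OF s] by simp
    finally show "(\<integral>\<^sup>+z. ennreal (mvn_density t (Vmat g) (0 + u) * normal_density (mloc g t (0 + u)) (1 / s) z) * 1 \<partial>lborel)
      = ennreal (mvn_density t (Vmat g) u)" .
  qed
  finally show ?thesis unfolding g_def by simp
qed

lemma mvn_integrable:
  fixes \<sigma> t :: "real^'k"
  assumes s0: "\<sigma>0 > 0" and sj: "\<forall>j. \<sigma>$j > 0"
  shows "integrable lborel (mvn_density t (Vmat (gam \<sigma>0 \<sigma>)))"
  using mvn_total[OF s0 sj, of t] mvn_nonneg[of "Vmat (gam \<sigma>0 \<sigma>)" t] det_Vmat_pos[OF gam_pos[OF s0 sj]]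
  by (intro integrableI_nonneg) (auto simp: less_imp_le)

lemma mvn_integral:
  fixes \<sigma> t :: "real^'k"
  assumes s0: "\<sigma>0 > 0" and sj: "\<forall>j. \<sigma>$j > 0"
  shows "integral\<^sup>L lborel (mvn_density t (Vmat (gam \<sigma>0 \<sigma>))) = 1"
  using mvn_total[OF s0 sj, of t] mvn_nonneg[of "Vmat (gam \<sigma>0 \<sigma>)" t] det_Vmat_pos[OF gam_pos[OF s0 sj]]
  by (subst integral_eq_nn_integral) (auto simp: less_imp_le)

lemma mvn_lower:
  fixes g t u :: "real^'k"
  assumes g: "\<forall>j. g$j > 0" and u: "\<forall>j. \<bar>u$j - t$j\<bar> \<le> 1"
  shows "exp (- norm1 g / 2) / sqrt ((2 * pi) ^ CARD('k) * det (Vmat g)) \<le> mvn_density t (Vmat g) u"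
proof -
  define w where "w = u - t"
  have q: "(u - t) \<bullet> (matrix_inv (Vmat g) *v (u - t)) \<le> norm1 g"
  proof -
    have "(u - t) \<bullet> (matrix_inv (Vmat g) *v (u - t)) = (\<Sum>j\<in>UNIV. g$j * (w$j)\<^sup>2) - (\<Sum>j\<in>UNIV. g$j * w$j)\<^sup>2 / (1 + sum (\<lambda>j. g$j) UNIV)"
      unfolding matrix_inv_Vmat[OF g] quad_Winv w_def ..
    also have "\<dots> \<le> (\<Sum>j\<in>UNIV. g$j * (w$j)\<^sup>2)"
      using g by (simp add: sum_nonneg less_imp_le)
    also have "\<dots> \<le> (\<Sum>j\<in>UNIV. g$j)"
    proof (rule sum_mono)
      fix j
      have "(w$j)\<^sup>2 \<le> 1" using u[rule_format, of j] by (simp add: w_def abs_le_square_iff[symmetric] power2_abs abs_square_le_1)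
      then show "g$j * (w$j)\<^sup>2 \<le> g$j" using g[rule_format, of j] by (simp add: mult_left_le)
    qed
    finally show ?thesis using norm1_pos[OF g] by simp
  qed
  have "exp (- norm1 g / 2) \<le> exp (- ((u - t) \<bullet> (matrix_inv (Vmat g) *v (u - t))) / 2)"
    using q by simp
  then show ?thesis unfolding mvn_density_def using det_Vmat_pos[OF g]
    by (intro divide_right_mono) auto
qed

definition aT :: "real \<Rightarrow> real \<Rightarrow> real^'k \<Rightarrow> real^'k \<Rightarrow> real^'k \<Rightarrow> real" where
  "aT \<alpha> \<sigma>0 \<sigma> t u = gam \<sigma>0 \<sigma> \<bullet> (t - trunc_vec \<alpha> (gam \<sigma>0 \<sigma>) u) / sqrt (1 + norm1 (gam \<sigma>0 \<sigma>))"

definition Fk :: "real \<Rightarrow> real \<Rightarrow> real^'k \<Rightarrow> real^'k \<Rightarrow> real \<Rightarrow> real^'k \<Rightarrow> real" where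
  "Fk \<alpha> \<sigma>0 \<sigma> t L u = (Phi (L - aT \<alpha> \<sigma>0 \<sigma> t u) - Phi (- L - aT \<alpha> \<sigma>0 \<sigma> t u)) * mvn_density t (Vmat (gam \<sigma>0 \<sigma>)) u"

lemma mvn_nn:
  fixes \<sigma> t :: "real^'k"
  assumes s0: "\<sigma>0 > 0" and sj: "\<forall>j. \<sigma>$j > 0"
  shows "mvn_density t (Vmat (gam \<sigma>0 \<sigma>)) u \<ge> 0"
  by (rule mvn_nonneg[OF less_imp_le[OF det_Vmat_pos[OF gam_pos[OF s0 sj]]]])

lemma cover_Fk:
  fixes \<sigma> t :: "real^'k"
  assumes s0: "\<sigma>0 > 0" and sj: "\<forall>j. \<sigma>$j > 0" and L: "L \<ge> 0"
  shows "cover_prob \<alpha> \<sigma>0 \<sigma> \<tau> (\<sigma>0 *\<^sub>R t) L = integral\<^sup>L lborel (Fk \<alpha> \<sigma>0 \<sigma> t L)"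
  unfolding part1[OF s0 sj L] Fk_def aT_def ..

lemma Fk_meas[measurable]: "Fk \<alpha> \<sigma>0 \<sigma> t L \<in> borel_measurable borel"
  unfolding Fk_def[abs_def] aT_def by measurable

lemma Fk_integrable:
  fixes \<sigma> t :: "real^'k"
  assumes s0: "\<sigma>0 > 0" and sj: "\<forall>j. \<sigma>$j > 0"
  shows "integrable lborel (Fk \<alpha> \<sigma>0 \<sigma> t L)"
proof (rule Bochner_Integration.integrable_bound[OF mvn_integrable[OF s0 sj, of t]])
  show "Fk \<alpha> \<sigma>0 \<sigma> t L \<in> borel_measurable lborel" by simp
  show "AE x in lborel. norm (Fk \<alpha> \<sigma>0 \<sigma> t L x) \<le> norm (mvn_density t (Vmat (gam \<sigma>0 \<sigma>)) x)"
  proof (rule AE_I2)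
    fix x
    have m: "mvn_density t (Vmat (gam \<sigma>0 \<sigma>)) x \<ge> 0"
      by (rule mvn_nn[OF s0 sj])
    have "\<bar>Phi (L - aT \<alpha> \<sigma>0 \<sigma> t x) - Phi (- L - aT \<alpha> \<sigma>0 \<sigma> t x)\<bar> \<le> 1"
      using Phi_bounds[of "L - aT \<alpha> \<sigma>0 \<sigma> t x"] Phi_bounds[of "- L - aT \<alpha> \<sigma>0 \<sigma> t x"] by auto
    then show "norm (Fk \<alpha> \<sigma>0 \<sigma> t L x) \<le> norm (mvn_density t (Vmat (gam \<sigma>0 \<sigma>)) x)"
      unfolding Fk_def using m by (simp add: abs_mult mult_left_le_one_le)
  qed
qed

lemma cover_zero:
  fixes \<sigma> t :: "real^'k"
  assumes s0: "\<sigma>0 > 0" and sj: "\<forall>j. \<sigma>$j > 0"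
  shows "cover_prob \<alpha> \<sigma>0 \<sigma> \<tau> (\<sigma>0 *\<^sub>R t) 0 = 0"
  unfolding cover_Fk[OF s0 sj order_refl] Fk_def by simp

lemma cover_upper:
  fixes \<sigma> t :: "real^'k"
  assumes s0: "\<sigma>0 > 0" and sj: "\<forall>j. \<sigma>$j > 0" and L: "0 \<le> L1" "L1 \<le> L2"
  shows "cover_prob \<alpha> \<sigma>0 \<sigma> \<tau> (\<sigma>0 *\<^sub>R t) L2 - cover_prob \<alpha> \<sigma>0 \<sigma> \<tau> (\<sigma>0 *\<^sub>R t) L1 \<le> 2 * (L2 - L1)"
proof -
  let ?m = "mvn_density t (Vmat (gam \<sigma>0 \<sigma>))"
  have "cover_prob \<alpha> \<sigma>0 \<sigma> \<tau> (\<sigma>0 *\<^sub>R t) L2 - cover_prob \<alpha> \<sigma>0 \<sigma> \<tau> (\<sigma>0 *\<^sub>R t) L1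
      = integral\<^sup>L lborel (\<lambda>u. Fk \<alpha> \<sigma>0 \<sigma> t L2 u - Fk \<alpha> \<sigma>0 \<sigma> t L1 u)"
    using L by (simp add: cover_Fk[OF s0 sj] Fk_integrable[OF s0 sj])
  also have "\<dots> \<le> integral\<^sup>L lborel (\<lambda>u. 2 * (L2 - L1) * ?m u)"
  proof (rule integral_mono)
    show "integrable lborel (\<lambda>u. Fk \<alpha> \<sigma>0 \<sigma> t L2 u - Fk \<alpha> \<sigma>0 \<sigma> t L1 u)"
      by (intro Bochner_Integration.integrable_diff Fk_integrable[OF s0 sj])
    show "integrable lborel (\<lambda>u. 2 * (L2 - L1) * ?m u)"
      by (intro integrable_mult_right mvn_integrable[OF s0 sj])
    fix u
    define a where "a = aT \<alpha> \<sigma>0 \<sigma> t u"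
    have m: "?m u \<ge> 0"
      by (rule mvn_nn[OF s0 sj])
    have "Phi (L2 - a) - Phi (L1 - a) \<le> L2 - L1" using Phi_diff_upper[of "L1 - a" "L2 - a"] L by simp
    moreover have "Phi (- L1 - a) - Phi (- L2 - a) \<le> L2 - L1" using Phi_diff_upper[of "- L2 - a" "- L1 - a"] L by simp
    ultimately have "(Phi (L2 - a) - Phi (- L2 - a)) - (Phi (L1 - a) - Phi (- L1 - a)) \<le> 2 * (L2 - L1)" by simp
    then have "((Phi (L2 - a) - Phi (- L2 - a)) - (Phi (L1 - a) - Phi (- L1 - a))) * ?m u \<le> 2 * (L2 - L1) * ?m u"
      using m by (rule mult_right_mono)
    then show "Fk \<alpha> \<sigma>0 \<sigma> t L2 u - Fk \<alpha> \<sigma>0 \<sigma> t L1 u \<le> 2 * (L2 - L1) * ?m u"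
      unfolding Fk_def a_def by (simp add: left_diff_distrib)
  qed
  also have "\<dots> = 2 * (L2 - L1)" using mvn_integral[OF s0 sj] by simp
  finally show ?thesis .
qed

lemma aT_bound:
  fixes \<sigma> t b u :: "real^'k"
  assumes s0: "\<sigma>0 > 0" and sj: "\<forall>j. \<sigma>$j > 0" and tb: "\<forall>j. \<bar>t$j\<bar> \<le> b$j" and u: "\<forall>j. \<bar>u$j - t$j\<bar> \<le> 1"
  shows "\<bar>aT \<alpha> \<sigma>0 \<sigma> t u\<bar> \<le> (\<Sum>j\<in>UNIV. gam \<sigma>0 \<sigma> $ j * (b$j + 1))"
proof -
  define g where "g = gam \<sigma>0 \<sigma>"
  have g: "\<forall>j. g$j > 0" unfolding g_def using gam_pos[OF s0 sj] .
  define s where "s = sqrt (1 + norm1 g)"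
  have s1: "s \<ge> 1" unfolding s_def using norm1_nonneg[of g] by simp
  define X where "X = g \<bullet> (t - trunc_vec \<alpha> g u)"
  have "\<bar>X\<bar> \<le> (\<Sum>j\<in>UNIV. \<bar>g$j * (t$j - (if \<bar>u$j\<bar> > sqrt (1 + 1 / g$j) * cq (\<alpha> / 2) then u$j else 0))\<bar>)"
    unfolding X_def inner_trunc by (rule sum_abs)
  also have "\<dots> \<le> (\<Sum>j\<in>UNIV. g$j * (b$j + 1))"
  proof (rule sum_mono)
    fix j
    have "\<bar>t$j - (if \<bar>u$j\<bar> > sqrt (1 + 1 / g$j) * cq (\<alpha> / 2) then u$j else 0)\<bar> \<le> b$j + 1"
      using tb[rule_format, of j] u[rule_format, of j] by (auto simp: abs_minus_commute)
    then show "\<bar>g$j * (t$j - (if \<bar>u$j\<bar> > sqrt (1 + 1 / g$j) * cq (\<alpha> / 2) then u$j else 0))\<bar> \<le> g$j * (b$j + 1)"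
      using g[rule_format, of j] by (simp add: abs_mult)
  qed
  finally have X: "\<bar>X\<bar> \<le> (\<Sum>j\<in>UNIV. g$j * (b$j + 1))" .
  have k: "\<bar>X\<bar> * 1 \<le> \<bar>X\<bar> * s" by (rule mult_left_mono[OF s1]) simp
  have "\<bar>X / s\<bar> \<le> \<bar>X\<bar>" using s1 k by (simp add: divide_le_eq)
  then show ?thesis using X unfolding aT_def X_def s_def g_def by simp
qed

lemma measure_box_t:
  fixes t :: "real^'k"
  shows "measure lborel (cbox (t - (\<chi> j. 1)) (t + (\<chi> j. 1))) = 2 ^ CARD('k)"
proof -
  have "\<forall>b\<in>(Basis::(real^'k) set). (t - (\<chi> j. 1)) \<bullet> b \<le> (t + (\<chi> j. 1)) \<bullet> b"
    unfolding Basis_vec_real by (auto simp: inner_axis)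
  moreover have "(\<Prod>b\<in>(Basis::(real^'k) set). (t + (\<chi> j. 1) - (t - (\<chi> j. 1))) \<bullet> b) = (\<Prod>b\<in>(Basis::(real^'k) set). 2)"
    unfolding Basis_vec_real by (intro prod.cong) (auto simp: inner_axis)
  ultimately show ?thesis by (simp add: measure_lborel_cbox_eq)
qed

lemma cover_lower:
  fixes \<sigma> t b :: "real^'k"
  assumes s0: "\<sigma>0 > 0" and sj: "\<forall>j. \<sigma>$j > 0" and tb: "\<forall>j. \<bar>t$j\<bar> \<le> b$j" and L: "0 \<le> L1" "L1 \<le> L2"
  shows "(L2 - L1) * std_normal_density (L2 + (\<Sum>j\<in>UNIV. gam \<sigma>0 \<sigma> $ j * (b$j + 1)))
      * (exp (- norm1 (gam \<sigma>0 \<sigma>) / 2) / sqrt ((2 * pi) ^ CARD('k) * det (Vmat (gam \<sigma>0 \<sigma>)))) * 2 ^ CARD('k)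
     \<le> cover_prob \<alpha> \<sigma>0 \<sigma> \<tau> (\<sigma>0 *\<^sub>R t) L2 - cover_prob \<alpha> \<sigma>0 \<sigma> \<tau> (\<sigma>0 *\<^sub>R t) L1"
proof -
  let ?m = "mvn_density t (Vmat (gam \<sigma>0 \<sigma>))"
  define A where "A = (\<Sum>j\<in>UNIV. gam \<sigma>0 \<sigma> $ j * (b$j + 1))"
  define \<mu> where "\<mu> = exp (- norm1 (gam \<sigma>0 \<sigma>) / 2) / sqrt ((2 * pi) ^ CARD('k) * det (Vmat (gam \<sigma>0 \<sigma>)))"
  define B where "B = cbox (t - (\<chi> j. 1)) (t + (\<chi> j. (1::real)))"
  define c where "c = (L2 - L1) * std_normal_density (L2 + A) * \<mu>"
  have \<mu>0: "\<mu> \<ge> 0" unfolding \<mu>_def using det_Vmat_pos[OF gam_pos[OF s0 sj]] by simp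
  have c0: "c \<ge> 0" unfolding c_def using L \<mu>0 by simp
  have "c * 2 ^ CARD('k) = integral\<^sup>L lborel (\<lambda>u. c * indicator B u)"
    unfolding B_def by (simp add: measure_box_t)
  also have "\<dots> \<le> integral\<^sup>L lborel (\<lambda>u. Fk \<alpha> \<sigma>0 \<sigma> t L2 u - Fk \<alpha> \<sigma>0 \<sigma> t L1 u)"
  proof (rule integral_mono)
    show "integrable lborel (\<lambda>u. Fk \<alpha> \<sigma>0 \<sigma> t L2 u - Fk \<alpha> \<sigma>0 \<sigma> t L1 u)"
      by (intro Bochner_Integration.integrable_diff Fk_integrable[OF s0 sj])
    show "integrable lborel (\<lambda>u. c * indicator B u)"
      unfolding B_def by (intro integrable_mult_right integrable_real_indicator) (auto simp: emeasure_lborel_cbox_finite[simplified])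
    fix u
    define a where "a = aT \<alpha> \<sigma>0 \<sigma> t u"
    have m: "?m u \<ge> 0" by (rule mvn_nn[OF s0 sj])
    have d2: "Phi (- L1 - a) - Phi (- L2 - a) \<ge> 0" using Phi_mono[of "- L2 - a" "- L1 - a"] L by simp
    have d1: "Phi (L2 - a) - Phi (L1 - a) \<ge> 0" using Phi_mono[of "L1 - a" "L2 - a"] L by simp
    have eq: "Fk \<alpha> \<sigma>0 \<sigma> t L2 u - Fk \<alpha> \<sigma>0 \<sigma> t L1 u = ((Phi (L2 - a) - Phi (L1 - a)) + (Phi (- L1 - a) - Phi (- L2 - a))) * ?m u"
      unfolding Fk_def a_def by (simp add: algebra_simps)
    show "c * indicator B u \<le> Fk \<alpha> \<sigma>0 \<sigma> t L2 u - Fk \<alpha> \<sigma>0 \<sigma> t L1 u"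
    proof (cases "u \<in> B")
      case True
      have ub: "\<forall>j. \<bar>u$j - t$j\<bar> \<le> 1"
      proof
        fix j
        have "t$j - 1 \<le> u$j \<and> u$j \<le> t$j + 1" using True unfolding B_def mem_box_cart by simp
        then show "\<bar>u$j - t$j\<bar> \<le> 1" by (auto simp: abs_le_iff)
      qed
      have aA: "\<bar>a\<bar> \<le> A" unfolding a_def A_def by (rule aT_bound[OF s0 sj tb ub])
      have "((L2 - a) - (L1 - a)) * std_normal_density (L2 + A) \<le> Phi (L2 - a) - Phi (L1 - a)"
        by (rule Phi_diff_lower) (use aA L in auto)
      then have "(L2 - L1) * std_normal_density (L2 + A) \<le> Phi (L2 - a) - Phi (L1 - a)" by simp
      then have p: "(L2 - L1) * std_normal_density (L2 + A) \<le> (Phi (L2 - a) - Phi (L1 - a)) + (Phi (- L1 - a) - Phi (- L2 - a))"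
        using d2 by linarith
      have mu: "\<mu> \<le> ?m u" unfolding \<mu>_def by (rule mvn_lower[OF gam_pos[OF s0 sj] ub])
      have "c = ((L2 - L1) * std_normal_density (L2 + A)) * \<mu>" unfolding c_def ..
      also have "\<dots> \<le> ((Phi (L2 - a) - Phi (L1 - a)) + (Phi (- L1 - a) - Phi (- L2 - a))) * ?m u"
        using p mu \<mu>0 L d1 d2 by (intro mult_mono) auto
      finally show ?thesis using True eq by simp
    next
      case False
      then show ?thesis using eq d1 d2 m by simp
    qed
  qed
  also have "integral\<^sup>L lborel (\<lambda>u. Fk \<alpha> \<sigma>0 \<sigma> t L2 u - Fk \<alpha> \<sigma>0 \<sigma> t L1 u)
     = cover_prob \<alpha> \<sigma>0 \<sigma> \<tau> (\<sigma>0 *\<^sub>R t) L2 - cover_prob \<alpha> \<sigma>0 \<sigma> \<tau> (\<sigma>0 *\<^sub>R t) L1"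
    using L by (simp add: cover_Fk[OF s0 sj] Fk_integrable[OF s0 sj])
  finally show ?thesis unfolding c_def A_def \<mu>_def by simp
qed

lemma cover_range:
  fixes \<sigma> \<Delta> :: "real^'k"
  assumes s0: "\<sigma>0 > 0" and sj: "\<forall>j. \<sigma>$j > 0"
  shows "0 \<le> cover_prob \<alpha> \<sigma>0 \<sigma> \<tau> \<Delta> L" "cover_prob \<alpha> \<sigma>0 \<sigma> \<tau> \<Delta> L \<le> 1"
proof -
  interpret P: prob_space "data_meas \<tau> \<Delta> \<sigma>0 \<sigma>" by (rule data_prob[OF s0 sj])
  show "0 \<le> cover_prob \<alpha> \<sigma>0 \<sigma> \<tau> \<Delta> L" "cover_prob \<alpha> \<sigma>0 \<sigma> \<tau> \<Delta> L \<le> 1"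
    unfolding cover_prob_def by auto
qed

lemma marg:
  fixes \<sigma> \<Delta> :: "real^'k"
  assumes s0: "\<sigma>0 > 0" and sj: "\<forall>j. \<sigma>$j > 0" and r: "r \<ge> 0"
  shows "measure (data_meas \<tau> \<Delta> \<sigma>0 \<sigma>) {\<omega> \<in> space (data_meas \<tau> \<Delta> \<sigma>0 \<sigma>). \<bar>fst \<omega> - \<tau>\<bar> \<le> r * \<sigma>0} = Phi r - Phi (- r)"
proof -
  define I where "I = {\<tau> - r * \<sigma>0 .. \<tau> + r * \<sigma>0}"
  have S: "{\<omega> \<in> space (data_meas \<tau> \<Delta> \<sigma>0 \<sigma>). \<bar>fst \<omega> - \<tau>\<bar> \<le> r * \<sigma>0} = fst -` I"
    unfolding I_def space_data by (auto simp: abs_le_iff)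
  have m[measurable]: "(\<lambda>\<omega>. normal_density \<tau> \<sigma>0 (fst \<omega>) * (\<Prod>j\<in>UNIV. normal_density (\<tau> + \<Delta>$j) (\<sigma>$j) (snd \<omega>$j))) \<in> borel_measurable borel"
    using dens_meas[of \<tau> \<sigma>0 \<Delta> \<sigma>] by (simp add: case_prod_beta')
  have fstm[measurable]: "(\<lambda>\<omega>::real \<times> (real^'k). fst \<omega>) \<in> borel_measurable borel"
    by (intro borel_measurable_continuous_onI continuous_intros)
  have fm: "fst -` I \<in> sets (borel :: (real \<times> (real^'k)) measure)"
  proof -
    have "fst -` I \<inter> space (borel \<Otimes>\<^sub>M borel) \<in> sets (borel \<Otimes>\<^sub>M (borel :: (real^'k) measure))"
      unfolding I_def by (intro measurable_sets[OF measurable_fst]) auto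
    then show ?thesis by (metis borel_prod space_borel inf_top.right_neutral)
  qed
  have "emeasure (data_meas \<tau> \<Delta> \<sigma>0 \<sigma>) (fst -` I)
    = (\<integral>\<^sup>+\<omega>. ennreal (normal_density \<tau> \<sigma>0 (fst \<omega>) * (\<Prod>j\<in>UNIV. normal_density (\<tau> + \<Delta>$j) (\<sigma>$j) (snd \<omega>$j))) * indicator (fst -` I) \<omega> \<partial>lborel)"
    unfolding data_meas_def using fm by (subst emeasure_density) (auto simp: case_prod_beta')
  also have "\<dots> = (\<integral>\<^sup>+\<omega>. ennreal (normal_density \<tau> \<sigma>0 (fst \<omega>) * (\<Prod>j\<in>UNIV. normal_density (\<tau> + \<Delta>$j) (\<sigma>$j) (snd \<omega>$j))) * indicator I (fst \<omega>) \<partial>(lborel \<Otimes>\<^sub>M lborel))"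
    by (simp add: lborel_prod indicator_def)
  also have "\<dots> = (\<integral>\<^sup>+x0. \<integral>\<^sup>+x. (ennreal (normal_density \<tau> \<sigma>0 x0) * indicator I x0) * (\<Prod>j\<in>UNIV. ennreal (normal_density (\<tau> + \<Delta>$j) (\<sigma>$j) (x$j))) \<partial>lborel \<partial>lborel)"
  proof -
    have "(\<lambda>\<omega>. ennreal (normal_density \<tau> \<sigma>0 (fst \<omega>) * (\<Prod>j\<in>UNIV. normal_density (\<tau> + \<Delta>$j) (\<sigma>$j) (snd \<omega>$j))) * indicator I (fst \<omega>)) \<in> borel_measurable (lborel \<Otimes>\<^sub>M lborel)"
      unfolding lborel_prod I_def by simp
    from lborel.nn_integral_fst[OF this] show ?thesis
      by (simp add: ennreal_mult prod_ennreal prod_nonneg mult_ac)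
  qed
  also have "\<dots> = (\<integral>\<^sup>+x0. (ennreal (normal_density \<tau> \<sigma>0 x0) * indicator I x0) * (\<Prod>j\<in>UNIV. \<integral>\<^sup>+y. ennreal (normal_density (\<tau> + \<Delta>$j) (\<sigma>$j) y) \<partial>lborel) \<partial>lborel)"
    using nn_integral_vec_prod[of "\<lambda>j y. ennreal (normal_density (\<tau> + \<Delta>$j) (\<sigma>$j) y)"]
    by (subst nn_integral_cmult) (auto simp: I_def)
  also have "\<dots> = (\<integral>\<^sup>+x0. ennreal (normal_density \<tau> \<sigma>0 x0) * indicator I x0 \<partial>lborel)"
    using s0 sj by (simp add: nn_integral_nd)
  also have "\<dots> = ennreal (Phi (((\<tau> + r * \<sigma>0) - \<tau>) / \<sigma>0) - Phi (((\<tau> - r * \<sigma>0) - \<tau>) / \<sigma>0))"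
    unfolding I_def using s0 r by (intro nd_Icc) auto
  also have "\<dots> = ennreal (Phi r - Phi (- r))" using s0 by simp
  finally have "emeasure (data_meas \<tau> \<Delta> \<sigma>0 \<sigma>) (fst -` I) = ennreal (Phi r - Phi (- r))" .
  moreover have "Phi r - Phi (- r) \<ge> 0" using Phi_mono[of "- r" r] r by simp
  ultimately show ?thesis unfolding S measure_def by simp
qed

definition Bc :: "real \<Rightarrow> real^'k \<Rightarrow> real" where
  "Bc \<alpha> g = (\<Sum>j\<in>UNIV. g$j / (1 + norm1 g) * (sqrt (1 + 1 / g$j) * \<bar>cq (\<alpha> / 2)\<bar>))"

lemma tau_bound:
  fixes \<sigma> :: "real^'k"
  assumes s0: "\<sigma>0 > 0" and sj: "\<forall>j. \<sigma>$j > 0"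
  shows "\<bar>tau_PT \<alpha> \<sigma>0 \<sigma> \<omega> - \<tau>\<bar> \<le> \<bar>fst \<omega> - \<tau>\<bar> + \<sigma>0 * Bc \<alpha> (gam \<sigma>0 \<sigma>)"
proof -
  define g where "g = gam \<sigma>0 \<sigma>"
  have g: "\<forall>j. g$j > 0" unfolding g_def using gam_pos[OF s0 sj] .
  have H: "1 + norm1 g > 0" using norm1_nonneg[of g] by linarith
  define x0 where "x0 = fst \<omega>"
  define x where "x = snd \<omega>"
  define T where "T = (\<lambda>j. g$j / (1 + norm1 g) * (x$j - x0) *
        (if \<bar>x$j - x0\<bar> \<le> sqrt (1 + 1 / g$j) * \<sigma>0 * cq (\<alpha> / 2) then 1 else (0::real)))"
  have e: "tau_PT \<alpha> \<sigma>0 \<sigma> \<omega> - \<tau> = (x0 - \<tau>) + sum T UNIV"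
    unfolding tau_PT_def Let_def T_def x0_def x_def g_def by simp
  have "\<bar>sum T UNIV\<bar> \<le> (\<Sum>j\<in>UNIV. \<bar>T j\<bar>)" by (rule sum_abs)
  also have "\<dots> \<le> (\<Sum>j\<in>UNIV. \<sigma>0 * (g$j / (1 + norm1 g) * (sqrt (1 + 1 / g$j) * \<bar>cq (\<alpha> / 2)\<bar>)))"
  proof (rule sum_mono)
    fix j
    have c: "g$j / (1 + norm1 g) \<ge> 0" using g[rule_format, of j] H by simp
    show "\<bar>T j\<bar> \<le> \<sigma>0 * (g$j / (1 + norm1 g) * (sqrt (1 + 1 / g$j) * \<bar>cq (\<alpha> / 2)\<bar>))"
    proof (cases "\<bar>x$j - x0\<bar> \<le> sqrt (1 + 1 / g$j) * \<sigma>0 * cq (\<alpha> / 2)")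
      case True
      have "sqrt (1 + 1 / g$j) * \<sigma>0 * cq (\<alpha> / 2) \<le> sqrt (1 + 1 / g$j) * \<sigma>0 * \<bar>cq (\<alpha> / 2)\<bar>"
      proof -
        have "0 < 1 / g$j" using g[rule_format, of j] by simp
        then have "0 \<le> sqrt (1 + 1 / g$j) * \<sigma>0" using s0 by simp
        then show ?thesis by (intro mult_left_mono) auto
      qed
      then have b: "\<bar>x$j - x0\<bar> \<le> \<sigma>0 * (sqrt (1 + 1 / g$j) * \<bar>cq (\<alpha> / 2)\<bar>)" using True by (simp add: mult_ac)
      have "\<bar>T j\<bar> = g$j / (1 + norm1 g) * \<bar>x$j - x0\<bar>"
        using True abs_of_nonneg[OF c] by (simp only: T_def abs_mult if_True mult_1_right)
      also have "\<dots> \<le> g$j / (1 + norm1 g) * (\<sigma>0 * (sqrt (1 + 1 / g$j) * \<bar>cq (\<alpha> / 2)\<bar>))"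
        using b c by (rule mult_left_mono)
      finally show ?thesis by (simp add: mult_ac)
    next
      case False
      have "0 < 1 / g$j" using g[rule_format, of j] by simp
      then have "0 \<le> sqrt (1 + 1 / g$j) * \<bar>cq (\<alpha> / 2)\<bar>" by simp
      then have "0 \<le> g$j / (1 + norm1 g) * (sqrt (1 + 1 / g$j) * \<bar>cq (\<alpha> / 2)\<bar>)" using c by (rule mult_nonneg_nonneg[rotated])
      then have "0 \<le> \<sigma>0 * (g$j / (1 + norm1 g) * (sqrt (1 + 1 / g$j) * \<bar>cq (\<alpha> / 2)\<bar>))" by (rule mult_nonneg_nonneg[OF less_imp_le[OF s0]])
      then show ?thesis using False by (simp add: T_def)
    qed
  qed
  also have "\<dots> = \<sigma>0 * Bc \<alpha> g" unfolding Bc_def by (simp add: sum_distrib_left)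
  finally have "\<bar>sum T UNIV\<bar> \<le> \<sigma>0 * Bc \<alpha> g" .
  then show ?thesis unfolding e x0_def[symmetric] g_def[symmetric] by linarith
qed

lemma exists_r:
  assumes z: "\<zeta> > 0"
  shows "\<exists>r\<ge>0. Phi r - Phi (- r) \<ge> 1 - \<zeta>"
proof -
  have l2: "((\<lambda>x. Phi (- x)) \<longlongrightarrow> 0) at_top"
    by (rule filterlim_compose[OF Phi_lim_bot filterlim_uminus_at_bot_at_top])
  have "eventually (\<lambda>x. 1 - \<zeta> / 2 < Phi x) at_top"
    using order_tendstoD(1)[OF Phi_lim_top, of "1 - \<zeta> / 2"] z by simp
  moreover have "eventually (\<lambda>x. Phi (- x) < \<zeta> / 2) at_top"
    using order_tendstoD(2)[OF l2, of "\<zeta> / 2"] z by simp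
  moreover have "eventually (\<lambda>x. (0::real) \<le> x) at_top" by (rule eventually_ge_at_top)
  ultimately have "eventually (\<lambda>x. 1 - \<zeta> / 2 < Phi x \<and> Phi (- x) < \<zeta> / 2 \<and> 0 \<le> x) at_top"
    by eventually_elim auto
  then obtain N where "\<forall>x\<ge>N. 1 - \<zeta> / 2 < Phi x \<and> Phi (- x) < \<zeta> / 2 \<and> 0 \<le> x"
    unfolding eventually_at_top_linorder by blast
  then have "1 - \<zeta> / 2 < Phi N \<and> Phi (- N) < \<zeta> / 2 \<and> 0 \<le> N" by auto
  then show ?thesis by (intro exI[of _ N]) auto
qed

lemma cover_big:
  fixes \<sigma> :: "real^'k"
  assumes s0: "\<sigma>0 > 0" and sj: "\<forall>j. \<sigma>$j > 0" and z: "\<zeta> > 0"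
  shows "\<exists>L0\<ge>0. \<forall>\<Delta>. 1 - \<zeta> \<le> cover_prob \<alpha> \<sigma>0 \<sigma> \<tau> \<Delta> L0"
proof -
  define g where "g = gam \<sigma>0 \<sigma>"
  define s where "s = sqrt (1 + norm1 g)"
  have s: "s > 0" unfolding s_def using norm1_nonneg[of g] by simp
  obtain r where r: "r \<ge> 0" "Phi r - Phi (- r) \<ge> 1 - \<zeta>" using exists_r[OF z] by blast
  have B0: "Bc \<alpha> g \<ge> 0" unfolding Bc_def
  proof (rule sum_nonneg)
    fix j
    have gj: "g$j > 0" using gam_pos[OF s0 sj] by (simp add: g_def)
    then have "0 < 1 / g$j" by simp
    then have "0 \<le> sqrt (1 + 1 / g$j) * \<bar>cq (\<alpha> / 2)\<bar>" by simp
    moreover have "0 \<le> g$j / (1 + norm1 g)" using gj norm1_nonneg[of g] by simp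
    ultimately show "0 \<le> g$j / (1 + norm1 g) * (sqrt (1 + 1 / g$j) * \<bar>cq (\<alpha> / 2)\<bar>)" by (rule mult_nonneg_nonneg[rotated])
  qed
  define L0 where "L0 = s * (r + Bc \<alpha> g)"
  have L0: "L0 \<ge> 0" unfolding L0_def using s r B0 by simp
  have "1 - \<zeta> \<le> cover_prob \<alpha> \<sigma>0 \<sigma> \<tau> \<Delta> L0" for \<Delta> :: "real^'k"
  proof -
    interpret P: prob_space "data_meas \<tau> \<Delta> \<sigma>0 \<sigma>" by (rule data_prob[OF s0 sj])
    have sub: "{\<omega> \<in> space (data_meas \<tau> \<Delta> \<sigma>0 \<sigma>). \<bar>fst \<omega> - \<tau>\<bar> \<le> r * \<sigma>0}
       \<subseteq> {\<omega> \<in> space (data_meas \<tau> \<Delta> \<sigma>0 \<sigma>). \<bar>tau_PT \<alpha> \<sigma>0 \<sigma> \<omega> - \<tau>\<bar> \<le> L0 / sqrt (1 + norm1 (gam \<sigma>0 \<sigma>)) * \<sigma>0}"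
    proof safe
      fix \<omega> :: "real \<times> (real^'k)" assume "\<bar>fst \<omega> - \<tau>\<bar> \<le> r * \<sigma>0"
      then have "\<bar>tau_PT \<alpha> \<sigma>0 \<sigma> \<omega> - \<tau>\<bar> \<le> r * \<sigma>0 + \<sigma>0 * Bc \<alpha> g"
        using tau_bound[OF s0 sj, of \<alpha> \<omega> \<tau>] unfolding g_def by linarith
      also have "\<dots> = L0 / sqrt (1 + norm1 (gam \<sigma>0 \<sigma>)) * \<sigma>0"
      proof -
        have "L0 / s = r + Bc \<alpha> g" using s unfolding L0_def by simp
        then show ?thesis unfolding s_def g_def by (simp add: algebra_simps)
      qed
      finally show "\<bar>tau_PT \<alpha> \<sigma>0 \<sigma> \<omega> - \<tau>\<bar> \<le> L0 / sqrt (1 + norm1 (gam \<sigma>0 \<sigma>)) * \<sigma>0" .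
    qed
    have "1 - \<zeta> \<le> measure (data_meas \<tau> \<Delta> \<sigma>0 \<sigma>) {\<omega> \<in> space (data_meas \<tau> \<Delta> \<sigma>0 \<sigma>). \<bar>fst \<omega> - \<tau>\<bar> \<le> r * \<sigma>0}"
      using marg[OF s0 sj r(1)] r(2) by simp
    also have "\<dots> \<le> cover_prob \<alpha> \<sigma>0 \<sigma> \<tau> \<Delta> L0"
      unfolding cover_prob_def
      by (rule P.finite_measure_mono[OF sub]) (simp add: sets_data space_data)
    finally show ?thesis .
  qed
  then show ?thesis using L0 by blast
qed

lemma bias_t:
  fixes \<Delta> b :: "real^'k"
  assumes s0: "\<sigma>0 > 0" and D: "\<Delta> \<in> bias_set \<sigma>0 b"
  shows "\<Delta> = \<sigma>0 *\<^sub>R ((1 / \<sigma>0) *\<^sub>R \<Delta>)" "\<forall>j. \<bar>((1 / \<sigma>0) *\<^sub>R \<Delta>)$j\<bar> \<le> b$j"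
  using s0 D by (auto simp: bias_set_def)

lemma part2:
  fixes \<sigma> b :: "real^'k"
  assumes s0: "\<sigma>0 > 0" and sj: "\<forall>j. \<sigma>$j > 0"
    and z0: "0 < \<zeta>" and z1: "\<zeta> < 1"
    and b0: "\<forall>j. b$j \<ge> 0"
  shows "unif_cov \<alpha> \<sigma>0 \<sigma> b \<tau> (L_PT \<alpha> \<zeta> \<sigma>0 \<sigma> b \<tau>) = 1 - \<zeta>
       \<and> (\<forall>L \<ge> 0. unif_cov \<alpha> \<sigma>0 \<sigma> b \<tau> L = 1 - \<zeta> \<longrightarrow> L = L_PT \<alpha> \<zeta> \<sigma>0 \<sigma> b \<tau>)
       \<and> (\<forall>\<Delta>\<in>bias_set \<sigma>0 b. cover_prob \<alpha> \<sigma>0 \<sigma> \<tau> \<Delta> (L_PT \<alpha> \<zeta> \<sigma>0 \<sigma> b \<tau>) \<ge> 1 - \<zeta>)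
       \<and> (\<forall>L \<ge> 0. (\<forall>\<Delta>\<in>bias_set \<sigma>0 b. cover_prob \<alpha> \<sigma>0 \<sigma> \<tau> \<Delta> L \<ge> 1 - \<zeta>)
                    \<longrightarrow> L_PT \<alpha> \<zeta> \<sigma>0 \<sigma> b \<tau> \<le> L)"
proof -
  define C where "C = (\<lambda>\<Delta> L. cover_prob \<alpha> \<sigma>0 \<sigma> \<tau> \<Delta> L)"
  define U where "U = unif_cov \<alpha> \<sigma>0 \<sigma> b \<tau>"
  define S where "S = bias_set \<sigma>0 b"
  have U_def': "U L = (INF \<Delta>\<in>S. C \<Delta> L)" for L unfolding U_def unif_cov_def C_def S_def ..
  have Sne: "S \<noteq> {}" unfolding S_def bias_set_def using b0 by (auto intro!: exI[of _ 0])
  have bdd: "bdd_below ((\<lambda>\<Delta>. C \<Delta> L) ` S)" for L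
    unfolding C_def using cover_range(1)[OF s0 sj] by (intro bdd_belowI[of _ 0]) auto
  have lowerU: "U L \<le> C \<Delta> L" if "\<Delta> \<in> S" for \<Delta> L
    unfolding U_def' by (rule cINF_lower[OF bdd that])
  have greatU: "m \<le> U L" if "\<And>\<Delta>. \<Delta> \<in> S \<Longrightarrow> m \<le> C \<Delta> L" for m L
    unfolding U_def' by (rule cINF_greatest[OF Sne that])
  have lip: "U L2 \<le> U L1 + 2 * (L2 - L1)" if "0 \<le> L1" "L1 \<le> L2" for L1 L2
  proof -
    have "U L2 - 2 * (L2 - L1) \<le> U L1"
    proof (rule greatU)
      fix \<Delta> assume D: "\<Delta> \<in> S"
      have "C \<Delta> L2 - C \<Delta> L1 \<le> 2 * (L2 - L1)"
        using cover_upper[OF s0 sj that, of \<alpha> \<tau> "(1 / \<sigma>0) *\<^sub>R \<Delta>"] bias_t[OF s0 D[unfolded S_def]]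
        unfolding C_def by simp
      then show "U L2 - 2 * (L2 - L1) \<le> C \<Delta> L1" using lowerU[OF D, of L2] by linarith
    qed
    then show ?thesis by linarith
  qed
  have strict: "U L1 < U L2" if "0 \<le> L1" "L1 < L2" for L1 L2
  proof -
    define A where "A = (\<Sum>j\<in>UNIV. gam \<sigma>0 \<sigma> $ j * (b$j + 1))"
    define \<mu> where "\<mu> = exp (- norm1 (gam \<sigma>0 \<sigma>) / 2) / sqrt ((2 * pi) ^ CARD('k) * det (Vmat (gam \<sigma>0 \<sigma>)))"
    define \<delta> where "\<delta> = (L2 - L1) * std_normal_density (L2 + A) * \<mu> * 2 ^ CARD('k)"
    have \<mu>: "\<mu> > 0" unfolding \<mu>_def using det_Vmat_pos[OF gam_pos[OF s0 sj]] by simp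
    have \<delta>: "\<delta> > 0" unfolding \<delta>_def using \<mu> that normal_density_pos[of 1 0] by simp
    have "U L1 + \<delta> \<le> U L2"
    proof (rule greatU)
      fix \<Delta> assume D: "\<Delta> \<in> S"
      have "\<delta> \<le> C \<Delta> L2 - C \<Delta> L1"
        using cover_lower[OF s0 sj bias_t(2)[OF s0 D[unfolded S_def]] that(1) less_imp_le[OF that(2)], of \<alpha> \<tau>]
          bias_t(1)[OF s0 D[unfolded S_def]]
        unfolding C_def \<delta>_def A_def \<mu>_def by simp
      then show "U L1 + \<delta> \<le> C \<Delta> L2" using lowerU[OF D, of L1] by linarith
    qed
    then show ?thesis using \<delta> by linarith
  qed
  have mono: "U L1 \<le> U L2" if "0 \<le> L1" "L1 \<le> L2" for L1 L2
  proof (cases "L1 = L2")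
    case False
    then have "L1 < L2" using that(2) by simp
    then show ?thesis using strict[OF that(1)] by (simp add: less_imp_le)
  qed simp
  have U0: "U 0 = 0"
  proof -
    have "C \<Delta> 0 = 0" if "\<Delta> \<in> S" for \<Delta>
      using cover_zero[OF s0 sj, of \<alpha> \<tau> "(1 / \<sigma>0) *\<^sub>R \<Delta>"] bias_t(1)[OF s0 that[unfolded S_def]]
      unfolding C_def by simp
    then have "(INF \<Delta>\<in>S. C \<Delta> 0) = (INF \<Delta>\<in>S. 0)" by (intro INF_cong) auto
    then show ?thesis unfolding U_def' using Sne by simp
  qed
  obtain L0 where L0: "L0 \<ge> 0" "\<forall>\<Delta>. 1 - \<zeta> \<le> C \<Delta> L0"
    using cover_big[OF s0 sj z0, of \<alpha> \<tau>] unfolding C_def by blast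
  have UL0: "1 - \<zeta> \<le> U L0" using L0(2) by (intro greatU) auto
  have cont: "continuous_on {0..L0} U"
  proof (rule lipschitz_on_continuous_on)
    show "2-lipschitz_on {0..L0} U"
    proof (rule lipschitz_onI)
      fix x y assume "x \<in> {0..L0}" "y \<in> {0..L0}"
      then have xy: "0 \<le> x" "0 \<le> y" by auto
      show "dist (U x) (U y) \<le> 2 * dist x y"
      proof (cases "x \<le> y")
        case True
        then show ?thesis using lip[OF xy(1) True] mono[OF xy(1) True] by (simp add: dist_real_def)
      next
        case False
        then have "y \<le> x" by simp
        then show ?thesis using lip[OF xy(2) \<open>y \<le> x\<close>] mono[OF xy(2) \<open>y \<le> x\<close>] by (simp add: dist_real_def)
      qed
    qed simp
  qed
  obtain Ls where Ls: "0 \<le> Ls" "Ls \<le> L0" "U Ls = 1 - \<zeta>"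
    using IVT'[of U 0 "1 - \<zeta>" L0, OF _ UL0 L0(1) cont] U0 z1 by auto
  define SS where "SS = {L. L \<ge> 0 \<and> U L \<ge> 1 - \<zeta>}"
  have below: "Ls \<le> L" if "L \<in> SS" for L
  proof (rule ccontr)
    assume "\<not> Ls \<le> L"
    then have "U L < U Ls" using that strict[of L Ls] unfolding SS_def by auto
    then show False using that Ls(3) unfolding SS_def by auto
  qed
  have LPT: "L_PT \<alpha> \<zeta> \<sigma>0 \<sigma> b \<tau> = Ls"
    unfolding L_PT_def U_def[symmetric] SS_def[symmetric]
    by (rule cInf_eq_minimum) (use Ls below in \<open>auto simp: SS_def\<close>)
  have c2: "L = Ls" if "L \<ge> 0" "U L = 1 - \<zeta>" for L
  proof (rule ccontr)
    assume "L \<noteq> Ls"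
    then consider "L < Ls" | "Ls < L" by linarith
    then show False
    proof cases
      case 1 then show False using strict[OF that(1) 1] that Ls by simp
    next
      case 2 then show False using strict[OF Ls(1) 2] that Ls by simp
    qed
  qed
  show ?thesis
    unfolding LPT U_def[symmetric] C_def[symmetric] S_def[symmetric]
  proof (intro conjI allI impI ballI)
    show "U Ls = 1 - \<zeta>" by (rule Ls(3))
    show "L = Ls" if "L \<ge> 0" "U L = 1 - \<zeta>" for L using c2 that by blast
    show "1 - \<zeta> \<le> C \<Delta> Ls" if "\<Delta> \<in> S" for \<Delta> using lowerU[OF that, of Ls] Ls(3) by simp
    show "Ls \<le> L" if "0 \<le> L" "\<forall>\<Delta>\<in>S. 1 - \<zeta> \<le> C \<Delta> L" for L
    proof -
      have "1 - \<zeta> \<le> U L" using that(2) by (intro greatU) auto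
      then show ?thesis using that(1) below unfolding SS_def by auto
    qed
  qed
qed

theorem theorem8:
  fixes \<sigma>0 \<alpha> \<zeta> :: real and \<sigma> b :: "real^'k"
  assumes "\<sigma>0 > 0" and "\<forall>j. \<sigma>$j > 0"
    and "0 < \<alpha>" and "\<alpha> < 1" and "0 < \<zeta>" and "\<zeta> < 1"
    and "\<forall>j. b$j \<ge> 0"
  shows
   "(\<forall>\<tau> (t::real^'k) L. L \<ge> 0 \<longrightarrow>
       cover_prob \<alpha> \<sigma>0 \<sigma> \<tau> (\<sigma>0 *\<^sub>R t) L =
       (\<integral>u. (Phi (L - gam \<sigma>0 \<sigma> \<bullet> (t - trunc_vec \<alpha> (gam \<sigma>0 \<sigma>) u) / sqrt (1 + norm1 (gam \<sigma>0 \<sigma>)))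
              - Phi (- L - gam \<sigma>0 \<sigma> \<bullet> (t - trunc_vec \<alpha> (gam \<sigma>0 \<sigma>) u) / sqrt (1 + norm1 (gam \<sigma>0 \<sigma>))))
             * mvn_density t (Vmat (gam \<sigma>0 \<sigma>)) u \<partial>lborel))
    \<and> (\<forall>\<tau>.
       unif_cov \<alpha> \<sigma>0 \<sigma> b \<tau> (L_PT \<alpha> \<zeta> \<sigma>0 \<sigma> b \<tau>) = 1 - \<zeta>
       \<and> (\<forall>L \<ge> 0. unif_cov \<alpha> \<sigma>0 \<sigma> b \<tau> L = 1 - \<zeta> \<longrightarrow> L = L_PT \<alpha> \<zeta> \<sigma>0 \<sigma> b \<tau>)
       \<and> (\<forall>\<Delta>\<in>bias_set \<sigma>0 b. cover_prob \<alpha> \<sigma>0 \<sigma> \<tau> \<Delta> (L_PT \<alpha> \<zeta> \<sigma>0 \<sigma> b \<tau>) \<ge> 1 - \<zeta>)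
       \<and> (\<forall>L \<ge> 0. (\<forall>\<Delta>\<in>bias_set \<sigma>0 b. cover_prob \<alpha> \<sigma>0 \<sigma> \<tau> \<Delta> L \<ge> 1 - \<zeta>)
                    \<longrightarrow> L_PT \<alpha> \<zeta> \<sigma>0 \<sigma> b \<tau> \<le> L))"
proof (rule conjI)
  show "\<forall>\<tau> (t::real^'k) L. L \<ge> 0 \<longrightarrow>
       cover_prob \<alpha> \<sigma>0 \<sigma> \<tau> (\<sigma>0 *\<^sub>R t) L =
       (\<integral>u. (Phi (L - gam \<sigma>0 \<sigma> \<bullet> (t - trunc_vec \<alpha> (gam \<sigma>0 \<sigma>) u) / sqrt (1 + norm1 (gam \<sigma>0 \<sigma>)))
              - Phi (- L - gam \<sigma>0 \<sigma> \<bullet> (t - trunc_vec \<alpha> (gam \<sigma>0 \<sigma>) u) / sqrt (1 + norm1 (gam \<sigma>0 \<sigma>))))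
             * mvn_density t (Vmat (gam \<sigma>0 \<sigma>)) u \<partial>lborel)"
    using part1[OF assms(1,2)] by blast
  show "\<forall>\<tau>.
       unif_cov \<alpha> \<sigma>0 \<sigma> b \<tau> (L_PT \<alpha> \<zeta> \<sigma>0 \<sigma> b \<tau>) = 1 - \<zeta>
       \<and> (\<forall>L \<ge> 0. unif_cov \<alpha> \<sigma>0 \<sigma> b \<tau> L = 1 - \<zeta> \<longrightarrow> L = L_PT \<alpha> \<zeta> \<sigma>0 \<sigma> b \<tau>)
       \<and> (\<forall>\<Delta>\<in>bias_set \<sigma>0 b. cover_prob \<alpha> \<sigma>0 \<sigma> \<tau> \<Delta> (L_PT \<alpha> \<zeta> \<sigma>0 \<sigma> b \<tau>) \<ge> 1 - \<zeta>)
       \<and> (\<forall>L \<ge> 0. (\<forall>\<Delta>\<in>bias_set \<sigma>0 b. cover_prob \<alpha> \<sigma>0 \<sigma> \<tau> \<Delta> L \<ge> 1 - \<zeta>)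
                    \<longrightarrow> L_PT \<alpha> \<zeta> \<sigma>0 \<sigma> b \<tau> \<le> L)"
    using part2[OF assms(1,2,5,6,7)] by blast
qed

end
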